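(* Let $\{1\}\to F\xrightarrow{\iota}G\xrightarrow{\pi}H\to\{1\}$ be a split exact sequence of groups with splitting $\sigma:H\to G$, and let $\Theta:H\to\mathrm{Aut}(F)$, $\Theta_h(x)=\iota^{-1}(\sigma(h)\iota(x)\sigma(h)^{-1})$. Then: (a) the composition $\Phi:\mathbf{k}F\otimes\mathbf{k}H\xrightarrow{\mathbf{k}\iota\otimes\mathbf{k}\sigma}\mathbf{k}G\otimes\mathbf{k}G\xrightarrow{\text{mult}}\mathbf{k}G$ is an isomorphism of left $\mathbf{k}F$-modules; (b) if $\Theta_h^{\mathrm{ab}}=\mathrm{id}_{F^{\mathrm{ab}}}$ for every $h\in H$, then for every $n\ge0$, $\Phi$ restricts to an isomorphism of left $\mathbf{k}F$-modules $\sum_{a+b=n}I_F^a\otimes I_H^b\xrightarrow{\sim}I_G^n$ (sum over $a,b\ge0$, inside $\mathbf{k}F\otimes\mathbf{k}H$).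
   Context: $\mathbf{k}$ is a commutative $\mathbb{Q}$-algebra. For a group $G$, $\mathbf{k}G$ is its group algebra, $I_G$ its augmentation ideal (spanned by $g-1$), $I_G^0=\mathbf{k}G$. $\Theta_h^{\mathrm{ab}}$ is the automorphism of the abelianization $F^{\mathrm{ab}}$ induced by $\Theta_h$. *)

theory Defs
  imports "HOL-Algebra.Algebra"
begin

definition Q_algebra :: "'k::comm_ring_1 itself \<Rightarrow> bool" where
  "Q_algebra _ \<longleftrightarrow> (\<forall>n::nat. n > 0 \<longrightarrow> (\<exists>y::'k. of_nat n * y = 1))"

text \<open>Finitely supported k-valued functions with support in A (free k-module on A).\<close>
definition fsupp_on :: "'a set \<Rightarrow> ('a \<Rightarrow> 'k::zero) set" where
  "fsupp_on A = {c. finite {x. c x \<noteq> 0} \<and> {x. c x \<noteq> 0} \<subseteq> A}"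

definition grp_alg :: "('g, 'b) monoid_scheme \<Rightarrow> ('g \<Rightarrow> 'k::zero) set" where
  "grp_alg G = fsupp_on (carrier G)"

definition delta :: "'a \<Rightarrow> 'a \<Rightarrow> 'k::{zero,one}" where
  "delta g = (\<lambda>x. if x = g then 1 else 0)"

definition conv :: "('g, 'b) monoid_scheme \<Rightarrow> ('g \<Rightarrow> 'k::comm_ring_1) \<Rightarrow> ('g \<Rightarrow> 'k) \<Rightarrow> 'g \<Rightarrow> 'k" where
  "conv G a b = (\<lambda>g. \<Sum>p \<in> {(x, y). x \<in> carrier G \<and> y \<in> carrier G \<and> x \<otimes>\<^bsub>G\<^esub> y = g
                                  \<and> a x \<noteq> 0 \<and> b y \<noteq> 0}. a (fst p) * b (snd p))"

inductive_set kspan :: "('a \<Rightarrow> 'k::comm_ring_1) set \<Rightarrow> ('a \<Rightarrow> 'k) set" for S where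
  zero: "(\<lambda>_. 0) \<in> kspan S"
| add: "x \<in> S \<Longrightarrow> y \<in> kspan S \<Longrightarrow> (\<lambda>i. c * x i + y i) \<in> kspan S"

definition aug_ideal :: "('g, 'b) monoid_scheme \<Rightarrow> ('g \<Rightarrow> 'k::comm_ring_1) set" where
  "aug_ideal G = kspan {(\<lambda>x. delta g x - delta \<one>\<^bsub>G\<^esub> x) | g. g \<in> carrier G}"

fun aug_pow :: "('g, 'b) monoid_scheme \<Rightarrow> nat \<Rightarrow> ('g \<Rightarrow> 'k::comm_ring_1) set" where
  "aug_pow G 0 = grp_alg G"
| "aug_pow G (Suc n) = kspan {conv G a b | a b. a \<in> aug_pow G n \<and> b \<in> aug_ideal G}"

text \<open>kF \<otimes> kH is modelled as the free k-module on carrier F \<times> carrier H;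
  the elementary tensor a \<otimes> b is (x,y) \<mapsto> a x * b y.\<close>
definition tens :: "('f \<Rightarrow> 'k::comm_ring_1) \<Rightarrow> ('h \<Rightarrow> 'k) \<Rightarrow> ('f \<times> 'h \<Rightarrow> 'k)" where
  "tens a b = (\<lambda>(x, y). a x * b y)"

definition tens_space :: "('f, 'b) monoid_scheme \<Rightarrow> ('h, 'c) monoid_scheme \<Rightarrow> ('f \<times> 'h \<Rightarrow> 'k::zero) set" where
  "tens_space F H = fsupp_on (carrier F \<times> carrier H)"

definition tens_lact :: "('f, 'b) monoid_scheme \<Rightarrow> ('f \<Rightarrow> 'k::comm_ring_1) \<Rightarrow> ('f \<times> 'h \<Rightarrow> 'k) \<Rightarrow> ('f \<times> 'h \<Rightarrow> 'k)" where
  "tens_lact F a c = (\<lambda>(x, y). conv F a (\<lambda>z. c (z, y)) x)"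

definition alg_map :: "('f, 'b) monoid_scheme \<Rightarrow> ('f \<Rightarrow> 'g) \<Rightarrow> ('f \<Rightarrow> 'k::comm_ring_1) \<Rightarrow> ('g \<Rightarrow> 'k)" where
  "alg_map F f a = (\<lambda>g. \<Sum>x \<in> {x. x \<in> carrier F \<and> f x = g \<and> a x \<noteq> 0}. a x)"

text \<open>\<Phi> = mult \<circ> (k\<iota> \<otimes> k\<sigma>), the k-linear map sending x \<otimes> h to \<iota>(x)\<sigma>(h).\<close>
definition Phi :: "('f, 'b) monoid_scheme \<Rightarrow> ('h, 'c) monoid_scheme \<Rightarrow> ('g, 'd) monoid_scheme
    \<Rightarrow> ('f \<Rightarrow> 'g) \<Rightarrow> ('h \<Rightarrow> 'g) \<Rightarrow> ('f \<times> 'h \<Rightarrow> 'k::comm_ring_1) \<Rightarrow> ('g \<Rightarrow> 'k)" where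
  "Phi F H G \<iota> \<sigma> c = (\<lambda>g. \<Sum>p \<in> {(x, y). x \<in> carrier F \<and> y \<in> carrier H
                          \<and> \<iota> x \<otimes>\<^bsub>G\<^esub> \<sigma> y = g \<and> c (x, y) \<noteq> 0}. c p)"

definition Theta :: "('f, 'b) monoid_scheme \<Rightarrow> ('g, 'd) monoid_scheme
    \<Rightarrow> ('f \<Rightarrow> 'g) \<Rightarrow> ('h \<Rightarrow> 'g) \<Rightarrow> 'h \<Rightarrow> 'f \<Rightarrow> 'f" where
  "Theta F G \<iota> \<sigma> h x = the_inv_into (carrier F) \<iota> (\<sigma> h \<otimes>\<^bsub>G\<^esub> \<iota> x \<otimes>\<^bsub>G\<^esub> inv\<^bsub>G\<^esub> (\<sigma> h))"

text \<open>The map induced by \<Theta>_h on F^ab = F Mod [F,F] is the identity: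
  it sends the coset [F,F] x to [F,F] \<Theta>_h(x).\<close>
definition Theta_ab_id :: "('f, 'b) monoid_scheme \<Rightarrow> ('g, 'd) monoid_scheme
    \<Rightarrow> ('f \<Rightarrow> 'g) \<Rightarrow> ('h \<Rightarrow> 'g) \<Rightarrow> 'h \<Rightarrow> bool" where
  "Theta_ab_id F G \<iota> \<sigma> h \<longleftrightarrow>
     (\<forall>x \<in> carrier F. derived F (carrier F) #>\<^bsub>F\<^esub> Theta F G \<iota> \<sigma> h x
                    = derived F (carrier F) #>\<^bsub>F\<^esub> x)"

end

theory Submission
  imports Defs
begin


abbreviation lc :: "'k::comm_ring_1 \<Rightarrow> ('a \<Rightarrow> 'k) \<Rightarrow> ('a \<Rightarrow> 'k) \<Rightarrow> ('a \<Rightarrow> 'k)" where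
  "lc c u v \<equiv> (\<lambda>i. c * u i + v i)"

definition subsp :: "('a \<Rightarrow> 'k::comm_ring_1) set \<Rightarrow> bool" where
  "subsp V \<longleftrightarrow> (\<lambda>_. 0) \<in> V \<and> (\<forall>c u v. u \<in> V \<longrightarrow> v \<in> V \<longrightarrow> lc c u v \<in> V)"

definition linon :: "('a \<Rightarrow> 'k::comm_ring_1) set \<Rightarrow> (('a \<Rightarrow> 'k) \<Rightarrow> ('b \<Rightarrow> 'k)) \<Rightarrow> bool" where
  "linon V f \<longleftrightarrow> (\<forall>u\<in>V. \<forall>v\<in>V. \<forall>c. f (lc c u v) = lc c (f u) (f v))"

lemma subspD0: "subsp V \<Longrightarrow> (\<lambda>_. 0) \<in> V" by (simp add: subsp_def)
lemma subspD: "subsp V \<Longrightarrow> u \<in> V \<Longrightarrow> v \<in> V \<Longrightarrow> lc c u v \<in> V" by (simp add: subsp_def)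
lemma subsp_add: "subsp V \<Longrightarrow> u \<in> V \<Longrightarrow> v \<in> V \<Longrightarrow> (\<lambda>i. u i + v i) \<in> V"
  using subspD[of V u v 1] by simp
lemma subsp_diff: "subsp V \<Longrightarrow> u \<in> V \<Longrightarrow> v \<in> V \<Longrightarrow> (\<lambda>i. u i - v i) \<in> V"
  using subspD[of V v u "-1"] by simp
lemma subsp_smult: "subsp V \<Longrightarrow> u \<in> V \<Longrightarrow> (\<lambda>i. c * u i) \<in> V"
  using subspD[of V u "\<lambda>_. 0" c] subspD0[of V] by simp

lemma kspan_lc: "u \<in> kspan S \<Longrightarrow> v \<in> kspan S \<Longrightarrow> lc c u v \<in> kspan S"
proof (induction u rule: kspan.induct)
  case zero then show ?case by simp
next
  case (add x y d)
  have "lc c (lc d x y) v = lc (c*d) x (lc c y v)" by (simp add: algebra_simps)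
  then show ?case using add by (simp add: kspan.add)
qed

lemma subsp_kspan: "subsp (kspan S)"
  by (simp add: subsp_def kspan.zero kspan_lc)

lemma kspan_incl: "x \<in> S \<Longrightarrow> x \<in> kspan S"
  using kspan.add[OF _ kspan.zero, of x S 1] by simp

lemma kspan_least: "subsp V \<Longrightarrow> S \<subseteq> V \<Longrightarrow> kspan S \<subseteq> V"
proof
  fix u assume V: "subsp V" "S \<subseteq> V" and u: "u \<in> kspan S"
  from u show "u \<in> V"
    by (induction u rule: kspan.induct) (use V in \<open>auto simp: subspD0 subspD\<close>)
qed

lemma kspan_mono: "S \<subseteq> T \<Longrightarrow> kspan S \<subseteq> kspan T"
  by (meson kspan_incl kspan_least subset_iff subsp_kspan)

lemma linon_zero: "linon V f \<Longrightarrow> (\<lambda>_. 0) \<in> V \<Longrightarrow> f (\<lambda>_. 0) = (\<lambda>_. 0)"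
  unfolding linon_def
  by (drule bspec[of _ _ "\<lambda>_. 0"], assumption, drule bspec[of _ _ "\<lambda>_. 0"], assumption)
     (drule spec[of _ "-1"], simp)

lemma linon_kspan_into:
  assumes "linon V f" "kspan S \<subseteq> V" "subsp W" "\<And>x. x \<in> S \<Longrightarrow> f x \<in> W" "u \<in> kspan S"
  shows "f u \<in> W"
  using assms(5)
proof (induction u rule: kspan.induct)
  case zero
  have "(\<lambda>_. 0) \<in> V" using assms(2) kspan.zero by blast
  then show ?case using linon_zero[OF assms(1)] subspD0[OF assms(3)] by simp
next
  case (add x y c)
  have "x \<in> V" "y \<in> V" using add assms(2) kspan_incl by auto
  then have "f (lc c x y) = lc c (f x) (f y)" using assms(1) unfolding linon_def by blast
  then show ?case using add assms(3,4) subspD by metis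
qed

lemma linon_kspan_image:
  assumes "linon V f" "kspan S \<subseteq> V"
  shows "f ` kspan S = kspan (f ` S)"
proof
  show "f ` kspan S \<subseteq> kspan (f ` S)"
    using linon_kspan_into[OF assms subsp_kspan] kspan_incl by blast
next
  show "kspan (f ` S) \<subseteq> f ` kspan S"
  proof
    fix w assume "w \<in> kspan (f ` S)"
    then show "w \<in> f ` kspan S"
    proof (induction w rule: kspan.induct)
      case zero
      then show ?case using linon_zero[OF assms(1)] assms(2) kspan.zero
        by (metis image_eqI subset_iff)
    next
      case (add x y c)
      then obtain x0 y0 where x0: "x0 \<in> S" "x = f x0" and y0: "y0 \<in> kspan S" "y = f y0" by auto
      have "f (lc c x0 y0) = lc c (f x0) (f y0)"
        using assms x0 y0 kspan_incl unfolding linon_def by blast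
      moreover have "lc c x0 y0 \<in> kspan S" using x0 y0 kspan_lc kspan_incl by blast
      ultimately have "lc c (f x0) (f y0) \<in> f ` kspan S" by (metis image_eqI)
      then show ?case using x0 y0 by simp
    qed
  qed
qed

lemma subsp_fsupp: "subsp (fsupp_on A :: ('a \<Rightarrow> 'k::comm_ring_1) set)"
  unfolding subsp_def fsupp_on_def
proof (intro conjI allI impI)
  fix c :: 'k and u v :: "'a \<Rightarrow> 'k"
  assume u: "u \<in> {c. finite {x. c x \<noteq> 0} \<and> {x. c x \<noteq> 0} \<subseteq> A}"
    and v: "v \<in> {c. finite {x. c x \<noteq> 0} \<and> {x. c x \<noteq> 0} \<subseteq> A}"
  have s: "{i. c * u i + v i \<noteq> 0} \<subseteq> {i. u i \<noteq> 0} \<union> {i. v i \<noteq> 0}" by auto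
  have "finite ({i. u i \<noteq> 0} \<union> {i. v i \<noteq> 0})" using u v by simp
  then have "finite {i. c * u i + v i \<noteq> 0}" using s finite_subset by blast
  moreover have "{i. c * u i + v i \<noteq> 0} \<subseteq> A" using s u v by blast
  ultimately show "lc c u v \<in> {c. finite {x. c x \<noteq> 0} \<and> {x. c x \<noteq> 0} \<subseteq> A}" by simp
qed simp

lemma delta_fsupp: "x \<in> A \<Longrightarrow> (delta x :: 'a \<Rightarrow> 'k::comm_ring_1) \<in> fsupp_on A"
proof -
  assume "x \<in> A"
  have "{i. (delta x i::'k) \<noteq> 0} \<subseteq> {x}" by (auto simp: delta_def)
  moreover have "finite {x}" by simp
  ultimately have "finite {i. (delta x i::'k) \<noteq> 0}" using finite_subset by blast
  then show ?thesis unfolding fsupp_on_def using \<open>x \<in> A\<close> \<open>{i. (delta x i::'k) \<noteq> 0} \<subseteq> {x}\<close> by blast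
qed

lemma fsupp_kspan_aux:
  "finite B \<Longrightarrow> \<forall>c::'a \<Rightarrow> 'k::comm_ring_1. {i. c i \<noteq> 0} \<subseteq> B \<longrightarrow> {i. c i \<noteq> 0} \<subseteq> A \<longrightarrow> c \<in> kspan {delta a | a. a \<in> A}"
proof (induction B rule: finite_induct)
  case empty
  show ?case
  proof (intro allI impI)
    fix c :: "'a \<Rightarrow> 'k" assume "{i. c i \<noteq> 0} \<subseteq> {}"
    then have "c = (\<lambda>_. 0)" by auto
    then show "c \<in> kspan {delta a | a. a \<in> A}" by (simp add: kspan.zero)
  qed
next
  case (insert a B)
  show ?case
  proof (intro allI impI)
    fix c :: "'a \<Rightarrow> 'k" assume c: "{i. c i \<noteq> 0} \<subseteq> insert a B" "{i. c i \<noteq> 0} \<subseteq> A"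
    define c' where "c' = c(a := 0)"
    have "{i. c' i \<noteq> 0} \<subseteq> B" using c(1) unfolding c'_def by auto
    moreover have "{i. c' i \<noteq> 0} \<subseteq> A" using c(2) unfolding c'_def by auto
    ultimately have c': "c' \<in> kspan {delta a | a. a \<in> A}" using insert.IH by blast
    show "c \<in> kspan {delta a | a. a \<in> A}"
    proof (cases "c a = 0")
      case True
      then have "c = c'" unfolding c'_def by auto
      then show ?thesis using c' by simp
    next
      case False
      then have "a \<in> A" using c by auto
      have "c = lc (c a) (delta a) c'" unfolding c'_def delta_def by (rule ext) simp
      moreover have "delta a \<in> {delta a | a. a \<in> A}" using \<open>a \<in> A\<close> by blast
      ultimately show ?thesis using kspan.add[OF _ c', of "delta a" "c a"] by simp
    qed
  qed
qed

lemma fsupp_sub_kspan: "c \<in> fsupp_on A \<Longrightarrow> (c :: 'a \<Rightarrow> 'k::comm_ring_1) \<in> kspan {delta a | a. a \<in> A}"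
  unfolding fsupp_on_def using fsupp_kspan_aux[of "{i. c i \<noteq> 0}" A] by blast

lemma fsupp_kspan: "(fsupp_on A :: ('a \<Rightarrow> 'k::comm_ring_1) set) = kspan {delta a | a. a \<in> A}"
proof (rule equalityI)
  show "fsupp_on A \<subseteq> kspan {delta a |a. a \<in> A}"
    using fsupp_sub_kspan by blast
  show "kspan {delta a |a. a \<in> A} \<subseteq> fsupp_on A"
    by (rule kspan_least[OF subsp_fsupp]) (auto simp: delta_fsupp)
qed

lemma fsupp_induct[consumes 1, case_names zero add]:
  assumes "a \<in> fsupp_on A" "P (\<lambda>_. 0)"
    "\<And>x c u. x \<in> A \<Longrightarrow> u \<in> fsupp_on A \<Longrightarrow> P u \<Longrightarrow> P (lc c (delta x) u)"
  shows "P a"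
proof -
  have "a \<in> kspan {delta a | a. a \<in> A}" using assms(1) fsupp_kspan by blast
  then show ?thesis
  proof (induction a rule: kspan.induct)
    case zero show ?case by (rule assms(2))
  next
    case (add x y c)
    from add(1) obtain b where "b \<in> A" "x = delta b" by blast
    moreover have "y \<in> fsupp_on A" using add(2) fsupp_kspan by blast
    ultimately show ?case using assms(3)[of b y c] add(3) by simp
  qed
qed


lemma linonD: "linon V f \<Longrightarrow> u \<in> V \<Longrightarrow> v \<in> V \<Longrightarrow> f (lc c u v) = lc c (f u) (f v)"
  unfolding linon_def by blast

lemma lin_eq:
  assumes "linon (fsupp_on A) f" "linon (fsupp_on A) g" "\<And>x. x \<in> A \<Longrightarrow> f (delta x) = g (delta x)"
    "a \<in> fsupp_on A"
  shows "f a = g a"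
  using assms(4)
proof (induction a rule: fsupp_induct)
  case zero
  then show ?case using linon_zero[OF assms(1)] linon_zero[OF assms(2)] subspD0[OF subsp_fsupp] by metis
next
  case (add x c u)
  have e1: "f (lc c (delta x) u) = lc c (f (delta x)) (f u)"
    by (rule linonD[OF assms(1) delta_fsupp[OF add(1)] add(2)])
  have e2: "g (lc c (delta x) u) = lc c (g (delta x)) (g u)"
    by (rule linonD[OF assms(2) delta_fsupp[OF add(1)] add(2)])
  have e3: "f (delta x) = g (delta x)" by (rule assms(3)[OF add(1)])
  show ?case unfolding e1 e2 e3 add(3) by (rule refl)
qed

lemma bilin_eq:
  fixes F G :: "('a \<Rightarrow> 'k::comm_ring_1) \<Rightarrow> ('b \<Rightarrow> 'k) \<Rightarrow> ('c \<Rightarrow> 'k)"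
  assumes "a \<in> fsupp_on A" "b \<in> fsupp_on B"
    "\<And>v. v \<in> fsupp_on B \<Longrightarrow> linon (fsupp_on A) (\<lambda>u. F u v)"
    "\<And>v. v \<in> fsupp_on B \<Longrightarrow> linon (fsupp_on A) (\<lambda>u. G u v)"
    "\<And>u. u \<in> fsupp_on A \<Longrightarrow> linon (fsupp_on B) (\<lambda>v. F u v)"
    "\<And>u. u \<in> fsupp_on A \<Longrightarrow> linon (fsupp_on B) (\<lambda>v. G u v)"
    "\<And>x y. x \<in> A \<Longrightarrow> y \<in> B \<Longrightarrow> F (delta x) (delta y) = G (delta x) (delta y)"
  shows "F a b = G a b"
proof -
  have "F (delta x) b = G (delta x) b" if "x \<in> A" for x
  proof -
    have d: "(delta x :: 'a \<Rightarrow> 'k) \<in> fsupp_on A" by (rule delta_fsupp[OF that])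
    show ?thesis by (rule lin_eq[OF assms(5)[OF d] assms(6)[OF d] assms(7)[OF that] assms(2)])
  qed
  then show ?thesis by (rule lin_eq[OF assms(3)[OF assms(2)] assms(4)[OF assms(2)] _ assms(1)])
qed

context group
begin

lemma inv_cancel_l1: "x \<in> carrier G \<Longrightarrow> y \<in> carrier G \<Longrightarrow> inv x \<otimes> (x \<otimes> y) = y"
  by (simp add: m_assoc[symmetric])
lemma inv_cancel_l2: "x \<in> carrier G \<Longrightarrow> y \<in> carrier G \<Longrightarrow> x \<otimes> (inv x \<otimes> y) = y"
  by (simp add: m_assoc[symmetric])

lemma conv_formula0:
  fixes a b :: "'a \<Rightarrow> 'k::comm_ring_1"
  assumes a: "a \<in> grp_alg G"
  shows "conv G a b g = (if g \<in> carrier G then \<Sum>x\<in>{x. a x \<noteq> 0}. a x * b (inv x \<otimes> g) else 0)"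
proof (cases "g \<in> carrier G")
  case False
  have E: "{(x, y). x \<in> carrier G \<and> y \<in> carrier G \<and> x \<otimes> y = g \<and> a x \<noteq> 0 \<and> b y \<noteq> 0} = {}"
    using False by (blast intro: m_closed)
  show ?thesis using False unfolding conv_def E by simp
next
  case True
  have fin: "finite {x. a x \<noteq> 0}" and sub: "{x. a x \<noteq> 0} \<subseteq> carrier G"
    using a unfolding grp_alg_def fsupp_on_def by auto
  define T where "T = {x. a x \<noteq> 0 \<and> b (inv x \<otimes> g) \<noteq> 0}"
  have S: "{(x, y). x \<in> carrier G \<and> y \<in> carrier G \<and> x \<otimes> y = g \<and> a x \<noteq> 0 \<and> b y \<noteq> 0}
        = (\<lambda>x. (x, inv x \<otimes> g)) ` T"
  proof (rule equalityI; rule subsetI)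
    fix p assume "p \<in> {(x, y). x \<in> carrier G \<and> y \<in> carrier G \<and> x \<otimes> y = g \<and> a x \<noteq> 0 \<and> b y \<noteq> 0}"
    then obtain x y where p: "p = (x, y)" "x \<in> carrier G" "y \<in> carrier G" "x \<otimes> y = g" "a x \<noteq> 0" "b y \<noteq> 0"
      by blast
    then have y: "y = inv x \<otimes> g" using inv_solve_left[of y x g] True by simp
    then have "x \<in> T" unfolding T_def using p by simp
    then show "p \<in> (\<lambda>x. (x, inv x \<otimes> g)) ` T" using p y by blast
  next
    fix p assume "p \<in> (\<lambda>x. (x, inv x \<otimes> g)) ` T"
    then obtain x where x: "p = (x, inv x \<otimes> g)" "a x \<noteq> 0" "b (inv x \<otimes> g) \<noteq> 0" unfolding T_def by blast
    then have xc: "x \<in> carrier G" using sub by blast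
    then have "x \<otimes> (inv x \<otimes> g) = g" "inv x \<otimes> g \<in> carrier G" using inv_cancel_l2 True by auto
    then show "p \<in> {(x, y). x \<in> carrier G \<and> y \<in> carrier G \<and> x \<otimes> y = g \<and> a x \<noteq> 0 \<and> b y \<noteq> 0}"
      using x xc by simp
  qed
  have inj: "inj_on (\<lambda>x. (x, inv x \<otimes> g)) T" by (rule inj_onI) simp
  have "conv G a b g = (\<Sum>x\<in>T. a x * b (inv x \<otimes> g))"
    unfolding conv_def S by (subst sum.reindex[OF inj]) simp
  also have "\<dots> = (\<Sum>x\<in>{x. a x \<noteq> 0}. a x * b (inv x \<otimes> g))"
    by (rule sum.mono_neutral_left) (use fin in \<open>auto simp: T_def\<close>)
  finally show ?thesis using True by simp
qed

lemma conv_formula: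
  fixes a b :: "'a \<Rightarrow> 'k::comm_ring_1"
  assumes a: "a \<in> grp_alg G" and A: "finite A" "{x. a x \<noteq> 0} \<subseteq> A"
  shows "conv G a b g = (if g \<in> carrier G then \<Sum>x\<in>A. a x * b (inv x \<otimes> g) else 0)"
proof -
  have "(\<Sum>x\<in>{x. a x \<noteq> 0}. a x * b (inv x \<otimes> g)) = (\<Sum>x\<in>A. a x * b (inv x \<otimes> g))"
    by (rule sum.mono_neutral_left) (use A in auto)
  then show ?thesis using conv_formula0[OF a] by simp
qed

lemma grp_alg_finite: "(a :: 'a \<Rightarrow> 'k::zero) \<in> grp_alg G \<Longrightarrow> finite {x. a x \<noteq> 0}"
  unfolding grp_alg_def fsupp_on_def by auto
lemma grp_alg_supp: "(a :: 'a \<Rightarrow> 'k::zero) \<in> grp_alg G \<Longrightarrow> a x \<noteq> 0 \<Longrightarrow> x \<in> carrier G"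
  unfolding grp_alg_def fsupp_on_def by auto

lemma subsp_grp_alg: "subsp (grp_alg G :: ('a \<Rightarrow> 'k::comm_ring_1) set)"
  unfolding grp_alg_def by (rule subsp_fsupp)

lemma delta_grp_alg: "x \<in> carrier G \<Longrightarrow> (delta x :: 'a \<Rightarrow> 'k::comm_ring_1) \<in> grp_alg G"
  unfolding grp_alg_def by (rule delta_fsupp)

lemma conv_lin_l:
  fixes a a' b :: "'a \<Rightarrow> 'k::comm_ring_1"
  assumes "a \<in> grp_alg G" "a' \<in> grp_alg G"
  shows "conv G (lc c a a') b = lc c (conv G a b) (conv G a' b)"
proof (rule ext)
  fix g
  define A where "A = {x. a x \<noteq> 0} \<union> {x. a' x \<noteq> 0}"
  have fA: "finite A" using assms grp_alg_finite unfolding A_def by blast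
  have l: "lc c a a' \<in> grp_alg G" using assms subspD[OF subsp_grp_alg] by blast
  have s: "{x. lc c a a' x \<noteq> 0} \<subseteq> A" unfolding A_def by auto
  have s1: "{x. a x \<noteq> 0} \<subseteq> A" "{x. a' x \<noteq> 0} \<subseteq> A" unfolding A_def by auto
  show "conv G (lc c a a') b g = lc c (conv G a b) (conv G a' b) g"
    unfolding conv_formula[OF l fA s] conv_formula[OF assms(1) fA s1(1)] conv_formula[OF assms(2) fA s1(2)]
    by (auto simp: A_def sum_distrib_left sum.distrib[symmetric] algebra_simps intro!: sum.cong)
qed

lemma conv_lin_r:
  fixes a b b' :: "'a \<Rightarrow> 'k::comm_ring_1"
  assumes "a \<in> grp_alg G"
  shows "conv G a (lc c b b') = lc c (conv G a b) (conv G a b')"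
proof (rule ext)
  fix g
  have fA: "finite {x. a x \<noteq> 0}" using assms grp_alg_finite by blast
  show "conv G a (lc c b b') g = lc c (conv G a b) (conv G a b') g"
    unfolding conv_formula[OF assms fA order_refl]
    by (auto simp: sum_distrib_left sum.distrib[symmetric] algebra_simps intro!: sum.cong)
qed

lemma conv_zero_l: "conv G (\<lambda>_. 0) b = (\<lambda>_. 0 :: 'k::comm_ring_1)"
  unfolding conv_def by simp

lemma conv_zero_r: "conv G a (\<lambda>_. 0) = (\<lambda>_. 0 :: 'k::comm_ring_1)"
  unfolding conv_def by simp

lemma conv_delta_l:
  fixes b :: "'a \<Rightarrow> 'k::comm_ring_1"
  assumes "x \<in> carrier G"
  shows "conv G (delta x) b = (\<lambda>g. if g \<in> carrier G then b (inv x \<otimes> g) else 0)"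
proof (rule ext)
  fix g
  have s: "{y. (delta x y :: 'k) \<noteq> 0} \<subseteq> {x}" by (auto simp: delta_def)
  show "conv G (delta x) b g = (if g \<in> carrier G then b (inv x \<otimes> g) else 0)"
    unfolding conv_formula[OF delta_grp_alg[OF assms] finite.insertI[OF finite.emptyI] s] by (simp add: delta_def)
qed

lemma conv_delta_delta:
  assumes "x \<in> carrier G" "y \<in> carrier G"
  shows "conv G (delta x) (delta y) = (delta (x \<otimes> y) :: 'a \<Rightarrow> 'k::comm_ring_1)"
proof (rule ext)
  fix g
  show "conv G (delta x) (delta y) g = (delta (x \<otimes> y) g :: 'k)"
    unfolding conv_delta_l[OF assms(1)] using assms
    by (auto simp: delta_def inv_solve_left' inv_cancel_l1)
qed

lemma linon_conv_l: "linon (grp_alg G) (\<lambda>u. conv G u (v :: 'a \<Rightarrow> 'k::comm_ring_1))"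
  unfolding linon_def using conv_lin_l by blast

lemma linon_conv_r: "(a :: 'a \<Rightarrow> 'k::comm_ring_1) \<in> grp_alg G \<Longrightarrow> linon V (conv G a)"
  unfolding linon_def using conv_lin_r by blast

lemma shift_grp_alg:
  fixes b :: "'a \<Rightarrow> 'k::zero"
  assumes "b \<in> grp_alg G" "x \<in> carrier G"
  shows "(\<lambda>g. if g \<in> carrier G then b (inv x \<otimes> g) else 0) \<in> grp_alg G"
proof -
  let ?s = "\<lambda>g. if g \<in> carrier G then b (inv x \<otimes> g) else 0"
  have "{g. ?s g \<noteq> 0} \<subseteq> (\<lambda>y. x \<otimes> y) ` {y. b y \<noteq> 0}"
  proof
    fix g assume "g \<in> {g. ?s g \<noteq> 0}"
    then have g: "g \<in> carrier G" "b (inv x \<otimes> g) \<noteq> 0" by (auto split: if_splits)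
    then have "g = x \<otimes> (inv x \<otimes> g)" using assms(2) inv_cancel_l2 by simp
    then show "g \<in> (\<lambda>y. x \<otimes> y) ` {y. b y \<noteq> 0}" using g by blast
  qed
  moreover have "finite ((\<lambda>y. x \<otimes> y) ` {y. b y \<noteq> 0})" using grp_alg_finite[OF assms(1)] by simp
  ultimately have "finite {g. ?s g \<noteq> 0}" using finite_subset by blast
  moreover have "{g. ?s g \<noteq> 0} \<subseteq> carrier G" by (auto split: if_splits)
  ultimately show ?thesis unfolding grp_alg_def fsupp_on_def by blast
qed

lemma conv_closed:
  fixes a b :: "'a \<Rightarrow> 'k::comm_ring_1"
  assumes "a \<in> grp_alg G" "b \<in> grp_alg G"
  shows "conv G a b \<in> grp_alg G"
proof -
  have "a \<in> fsupp_on (carrier G)" using assms unfolding grp_alg_def by simp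
  then show ?thesis
  proof (induction a rule: fsupp_induct)
    case zero
    then show ?case by (simp add: conv_zero_l subspD0[OF subsp_grp_alg])
  next
    case (add x c u)
    have "conv G (lc c (delta x) u) b = lc c (conv G (delta x) b) (conv G u b)"
      using conv_lin_l add delta_grp_alg unfolding grp_alg_def by blast
    moreover have "conv G (delta x) b \<in> grp_alg G"
      unfolding conv_delta_l[OF add(1)] using shift_grp_alg assms add by blast
    ultimately show ?case using add subspD[OF subsp_grp_alg] by simp
  qed
qed

lemma lin_conv_conv_l:
  fixes u w v c :: "'a \<Rightarrow> 'k::comm_ring_1"
  assumes "u \<in> grp_alg G" "w \<in> grp_alg G" "v \<in> grp_alg G"
  shows "conv G (conv G (lc k u w) v) c = lc k (conv G (conv G u v) c) (conv G (conv G w v) c)"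
proof -
  have "conv G (lc k u w) v = lc k (conv G u v) (conv G w v)" by (rule conv_lin_l[OF assms(1,2)])
  moreover have "conv G u v \<in> grp_alg G" "conv G w v \<in> grp_alg G" using conv_closed assms by auto
  ultimately show ?thesis using conv_lin_l[of "conv G u v" "conv G w v" k c] by simp
qed

lemma lin_conv_conv_r:
  fixes u w v c :: "'a \<Rightarrow> 'k::comm_ring_1"
  assumes "u \<in> grp_alg G" "w \<in> grp_alg G" "v \<in> grp_alg G"
  shows "conv G (conv G v (lc k u w)) c = lc k (conv G (conv G v u) c) (conv G (conv G v w) c)"
proof -
  have "conv G v (lc k u w) = lc k (conv G v u) (conv G v w)" by (rule conv_lin_r[OF assms(3)])
  moreover have "conv G v u \<in> grp_alg G" "conv G v w \<in> grp_alg G" using conv_closed assms by auto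
  ultimately show ?thesis using conv_lin_l[of "conv G v u" "conv G v w" k c] by simp
qed

lemma lin_conv_conv_m:
  fixes u w v c :: "'a \<Rightarrow> 'k::comm_ring_1"
  assumes "u \<in> grp_alg G" "w \<in> grp_alg G" "v \<in> grp_alg G"
  shows "conv G v (conv G (lc k u w) c) = lc k (conv G v (conv G u c)) (conv G v (conv G w c))"
proof -
  have "conv G (lc k u w) c = lc k (conv G u c) (conv G w c)" by (rule conv_lin_l[OF assms(1,2)])
  then show ?thesis using conv_lin_r[OF assms(3), of k "conv G u c" "conv G w c"] by simp
qed

lemma conv_assoc:
  fixes a b c :: "'a \<Rightarrow> 'k::comm_ring_1"
  assumes "a \<in> grp_alg G" "b \<in> grp_alg G"
  shows "conv G (conv G a b) c = conv G a (conv G b c)"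
proof (rule bilin_eq[of a "carrier G" b "carrier G" "\<lambda>u v. conv G (conv G u v) c" "\<lambda>u v. conv G u (conv G v c)"])
  show "a \<in> fsupp_on (carrier G)" "b \<in> fsupp_on (carrier G)" using assms unfolding grp_alg_def by auto
next
  fix v :: "'a \<Rightarrow> 'k" assume v: "v \<in> fsupp_on (carrier G)"
  show "linon (fsupp_on (carrier G)) (\<lambda>u. conv G (conv G u v) c)"
    unfolding linon_def grp_alg_def[symmetric] using v lin_conv_conv_l unfolding grp_alg_def by blast
  show "linon (fsupp_on (carrier G)) (\<lambda>u. conv G u (conv G v c))"
    unfolding linon_def grp_alg_def[symmetric] using conv_lin_l unfolding grp_alg_def by blast
next
  fix u :: "'a \<Rightarrow> 'k" assume u: "u \<in> fsupp_on (carrier G)"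
  show "linon (fsupp_on (carrier G)) (\<lambda>v. conv G (conv G u v) c)"
    unfolding linon_def grp_alg_def[symmetric] using u lin_conv_conv_r unfolding grp_alg_def by blast
  show "linon (fsupp_on (carrier G)) (\<lambda>v. conv G u (conv G v c))"
    unfolding linon_def grp_alg_def[symmetric] using u lin_conv_conv_m unfolding grp_alg_def by blast
next
  fix x y assume xy: "x \<in> carrier G" "y \<in> carrier G"
  have "conv G (delta x) (conv G (delta y) c) = conv G (delta (x \<otimes> y)) c"
  proof (rule ext)
    fix g show "conv G (delta x) (conv G (delta y) c) g = conv G (delta (x \<otimes> y)) c g"
      unfolding conv_delta_l[OF xy(1)] conv_delta_l[OF xy(2)] conv_delta_l[OF m_closed[OF xy]]
      using xy by (simp add: inv_mult_group m_assoc)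
  qed
  then show "conv G (conv G (delta x) (delta y)) c = conv G (delta x) (conv G (delta y) c)"
    by (simp add: conv_delta_delta[OF xy])
qed

lemma conv_one_l:
  fixes b :: "'a \<Rightarrow> 'k::comm_ring_1"
  assumes "b \<in> grp_alg G"
  shows "conv G (delta \<one>) b = b"
proof (rule ext)
  fix g show "conv G (delta \<one>) b g = b g"
    unfolding conv_delta_l[OF one_closed] using grp_alg_supp[OF assms] by auto
qed

lemma conv_one_r:
  fixes a :: "'a \<Rightarrow> 'k::comm_ring_1"
  assumes "a \<in> grp_alg G"
  shows "conv G a (delta \<one>) = a"
proof -
  have "linon (fsupp_on (carrier G)) (\<lambda>u. conv G u (delta \<one> :: 'a \<Rightarrow> 'k))"
    using linon_conv_l[of "delta \<one>"] unfolding grp_alg_def by simp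
  moreover have "linon (fsupp_on (carrier G)) (\<lambda>u::'a \<Rightarrow> 'k. u)" unfolding linon_def by simp
  moreover have "conv G (delta x) (delta \<one>) = (delta x :: 'a \<Rightarrow> 'k)" if "x \<in> carrier G" for x
    using conv_delta_delta[OF that one_closed] that by simp
  ultimately show ?thesis using lin_eq[of "carrier G" "\<lambda>u. conv G u (delta \<one>)" "\<lambda>u. u" a] assms
    unfolding grp_alg_def by blast
qed

end


lemma lc_diff: "(\<lambda>x. a x - b x) = lc (-1) b (a :: 'a \<Rightarrow> 'k::comm_ring_1)"
  by (rule ext) simp
lemma lc_add: "(\<lambda>x. a x + b x) = lc 1 a (b :: 'a \<Rightarrow> 'k::comm_ring_1)"
  by (rule ext) simp

context group
begin

lemma conv_diff_l:
  fixes a b c :: "'a \<Rightarrow> 'k::comm_ring_1"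
  assumes "a \<in> grp_alg G" "b \<in> grp_alg G"
  shows "conv G (\<lambda>x. a x - b x) c = (\<lambda>x. conv G a c x - conv G b c x)"
proof -
  have e: "(\<lambda>x. a x - b x) = lc (-1) b a" by (rule ext) simp
  show ?thesis unfolding e conv_lin_l[OF assms(2,1)] by (rule ext) simp
qed

lemma conv_add_l:
  fixes a b c :: "'a \<Rightarrow> 'k::comm_ring_1"
  assumes "a \<in> grp_alg G" "b \<in> grp_alg G"
  shows "conv G (\<lambda>x. a x + b x) c = (\<lambda>x. conv G a c x + conv G b c x)"
proof -
  have e: "(\<lambda>x. a x + b x) = lc 1 a b" by (rule ext) simp
  show ?thesis unfolding e conv_lin_l[OF assms(1,2)] by (rule ext) simp
qed

lemma conv_diff_r:
  fixes a b c :: "'a \<Rightarrow> 'k::comm_ring_1"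
  assumes "c \<in> grp_alg G"
  shows "conv G c (\<lambda>x. a x - b x) = (\<lambda>x. conv G c a x - conv G c b x)"
proof -
  have e: "(\<lambda>x. a x - b x) = lc (-1) b a" by (rule ext) simp
  show ?thesis unfolding e conv_lin_r[OF assms] by (rule ext) simp
qed

lemma conv_add_r:
  fixes a b c :: "'a \<Rightarrow> 'k::comm_ring_1"
  assumes "c \<in> grp_alg G"
  shows "conv G c (\<lambda>x. a x + b x) = (\<lambda>x. conv G c a x + conv G c b x)"
proof -
  have e: "(\<lambda>x. a x + b x) = lc 1 a b" by (rule ext) simp
  show ?thesis unfolding e conv_lin_r[OF assms] by (rule ext) simp
qed

lemma grp_alg_kspan: "grp_alg G = kspan {delta a | a. a \<in> carrier G}"
  unfolding grp_alg_def by (rule fsupp_kspan)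

lemma aug_gen_alg: "g \<in> carrier G \<Longrightarrow> (\<lambda>x. delta g x - delta \<one> x) \<in> (grp_alg G :: ('a \<Rightarrow> 'k::comm_ring_1) set)"
  by (rule subsp_diff[OF subsp_grp_alg delta_grp_alg delta_grp_alg]) auto

lemma aug_gen_in: "g \<in> carrier G \<Longrightarrow> (\<lambda>x. delta g x - delta \<one> x) \<in> (aug_ideal G :: ('a \<Rightarrow> 'k::comm_ring_1) set)"
  unfolding aug_ideal_def by (rule kspan_incl) blast

lemma subsp_aug_ideal: "subsp (aug_ideal G :: ('a \<Rightarrow> 'k::comm_ring_1) set)"
  unfolding aug_ideal_def by (rule subsp_kspan)

lemma aug_ideal_sub: "aug_ideal G \<subseteq> (grp_alg G :: ('a \<Rightarrow> 'k::comm_ring_1) set)"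
  unfolding aug_ideal_def
  by (rule kspan_least[OF subsp_grp_alg]) (auto intro: aug_gen_alg)

lemma subsp_aug_pow: "subsp (aug_pow G n :: ('a \<Rightarrow> 'k::comm_ring_1) set)"
  by (cases n) (simp_all add: subsp_grp_alg subsp_kspan)

lemma aug_pow_sub: "aug_pow G n \<subseteq> (grp_alg G :: ('a \<Rightarrow> 'k::comm_ring_1) set)"
proof (induction n)
  case 0 then show ?case by simp
next
  case (Suc n)
  show ?case unfolding aug_pow.simps
  proof (rule kspan_least[OF subsp_grp_alg], rule subsetI)
    fix w :: "'a \<Rightarrow> 'k" assume "w \<in> {conv G a b |a b. a \<in> aug_pow G n \<and> b \<in> aug_ideal G}"
    then obtain a b where "w = conv G a b" "a \<in> aug_pow G n" "b \<in> aug_ideal G" by blast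
    then show "w \<in> grp_alg G" using conv_closed Suc aug_ideal_sub by blast
  qed
qed

lemma delta_diff_alg: "x \<in> carrier G \<Longrightarrow> y \<in> carrier G \<Longrightarrow> (\<lambda>i. delta x i - delta y i) \<in> (grp_alg G :: ('a \<Rightarrow> 'k::comm_ring_1) set)"
  by (rule subsp_diff[OF subsp_grp_alg delta_grp_alg delta_grp_alg])

lemma delta_diff_aug: "x \<in> carrier G \<Longrightarrow> y \<in> carrier G \<Longrightarrow> (\<lambda>i. delta x i - delta y i) \<in> (aug_ideal G :: ('a \<Rightarrow> 'k::comm_ring_1) set)"
proof -
  assume xy: "x \<in> carrier G" "y \<in> carrier G"
  have "(\<lambda>i. delta x i - delta y i) = (\<lambda>i. (delta x i - delta \<one> i) - (delta y i - delta \<one> i :: 'k))"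
    by (rule ext) simp
  moreover have "(\<lambda>i. (delta x i - delta \<one> i) - (delta y i - delta \<one> i :: 'k)) \<in> aug_ideal G"
    by (rule subsp_diff[OF subsp_aug_ideal aug_gen_in[OF xy(1)] aug_gen_in[OF xy(2)]])
  ultimately show ?thesis by simp
qed

lemma conv_gen_delta:
  assumes "g \<in> carrier G" "y \<in> carrier G"
  shows "conv G (\<lambda>x. delta g x - delta \<one> x) (delta y) = (\<lambda>x. delta (g \<otimes> y) x - delta y x :: 'k::comm_ring_1)"
  unfolding conv_diff_l[OF delta_grp_alg[OF assms(1)] delta_grp_alg[OF one_closed]]
    conv_delta_delta[OF assms] conv_delta_delta[OF one_closed assms(2)] using assms by simp

lemma conv_delta_gen:
  assumes "g \<in> carrier G" "y \<in> carrier G"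
  shows "conv G (delta y) (\<lambda>x. delta g x - delta \<one> x) = (\<lambda>x. delta (y \<otimes> g) x - delta y x :: 'k::comm_ring_1)"
  unfolding conv_diff_r[OF delta_grp_alg[OF assms(2)]]
    conv_delta_delta[OF assms(2,1)] conv_delta_delta[OF assms(2) one_closed] using assms by simp

lemma aug_ideal_right:
  fixes u v :: "'a \<Rightarrow> 'k::comm_ring_1"
  assumes u: "u \<in> aug_ideal G" and v: "v \<in> grp_alg G"
  shows "conv G u v \<in> aug_ideal G"
proof -
  have gen: "conv G (\<lambda>x. delta g x - delta \<one> x) v \<in> aug_ideal G" if g: "g \<in> carrier G" for g
  proof -
    show ?thesis
    proof (rule linon_kspan_into[OF linon_conv_r[OF aug_gen_alg[OF g]] _ subsp_aug_ideal])
      show "v \<in> kspan {delta a | a. a \<in> carrier G}" using v grp_alg_kspan by blast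
      show "kspan {delta a |a. a \<in> carrier G} \<subseteq> UNIV" by simp
    next
      fix w :: "'a \<Rightarrow> 'k" assume "w \<in> {delta a |a. a \<in> carrier G}"
      then obtain y where y: "y \<in> carrier G" "w = delta y" by blast
      show "conv G (\<lambda>x. delta g x - delta \<one> x) w \<in> aug_ideal G"
        unfolding y(2) conv_gen_delta[OF g y(1)] by (rule delta_diff_aug) (use g y in auto)
    qed
  qed
  show ?thesis
  proof (rule linon_kspan_into[OF linon_conv_l _ subsp_aug_ideal])
    show "kspan {\<lambda>x. delta g x - delta \<one> x |g. g \<in> carrier G} \<subseteq> grp_alg G"
      using aug_ideal_sub unfolding aug_ideal_def .
    show "u \<in> kspan {\<lambda>x. delta g x - delta \<one> x |g. g \<in> carrier G}" using u unfolding aug_ideal_def .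
  next
    fix w :: "'a \<Rightarrow> 'k" assume "w \<in> {\<lambda>x. delta g x - delta \<one> x |g. g \<in> carrier G}"
    then obtain g where "g \<in> carrier G" "w = (\<lambda>x. delta g x - delta \<one> x)" by blast
    then show "conv G w v \<in> aug_ideal G" using gen by simp
  qed
qed

lemma aug_ideal_left:
  fixes u v :: "'a \<Rightarrow> 'k::comm_ring_1"
  assumes u: "u \<in> grp_alg G" and v: "v \<in> aug_ideal G"
  shows "conv G u v \<in> aug_ideal G"
proof -
  have gen: "conv G u (\<lambda>x. delta g x - delta \<one> x) \<in> aug_ideal G" if g: "g \<in> carrier G" for g
  proof -
    show ?thesis
    proof (rule linon_kspan_into[OF linon_conv_l _ subsp_aug_ideal])
      show "u \<in> kspan {delta a | a. a \<in> carrier G}" using u grp_alg_kspan by blast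
      show "kspan {delta a |a. a \<in> carrier G} \<subseteq> grp_alg G" unfolding grp_alg_kspan by (rule order_refl)
    next
      fix w :: "'a \<Rightarrow> 'k" assume "w \<in> {delta a |a. a \<in> carrier G}"
      then obtain y where y: "y \<in> carrier G" "w = delta y" by blast
      show "conv G w (\<lambda>x. delta g x - delta \<one> x) \<in> aug_ideal G"
        unfolding y(2) conv_delta_gen[OF g y(1)] by (rule delta_diff_aug) (use g y in auto)
    qed
  qed
  show ?thesis
  proof (rule linon_kspan_into[OF linon_conv_r[OF u] _ subsp_aug_ideal])
    show "kspan {\<lambda>x. delta g x - delta \<one> x |g. g \<in> carrier G} \<subseteq> UNIV" by simp
    show "v \<in> kspan {\<lambda>x. delta g x - delta \<one> x |g. g \<in> carrier G}" using v unfolding aug_ideal_def .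
  next
    fix w :: "'a \<Rightarrow> 'k" assume "w \<in> {\<lambda>x. delta g x - delta \<one> x |g. g \<in> carrier G}"
    then obtain g where "g \<in> carrier G" "w = (\<lambda>x. delta g x - delta \<one> x)" by blast
    then show "conv G u w \<in> aug_ideal G" using gen by simp
  qed
qed

lemma aug_pow_gen:
  "a \<in> aug_pow G n \<Longrightarrow> b \<in> aug_ideal G \<Longrightarrow> conv G a b \<in> (aug_pow G (Suc n) :: ('a \<Rightarrow> 'k::comm_ring_1) set)"
  unfolding aug_pow.simps by (rule kspan_incl) blast

lemma aug_pow_right:
  fixes u v :: "'a \<Rightarrow> 'k::comm_ring_1"
  assumes "u \<in> aug_pow G n" "v \<in> grp_alg G"
  shows "conv G u v \<in> aug_pow G n"
  using assms(1)
proof (induction n arbitrary: u)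
  case 0 then show ?case using conv_closed[OF _ assms(2)] by simp
next
  case (Suc n)
  show ?case
  proof (rule linon_kspan_into[OF linon_conv_l _ subsp_aug_pow])
    show "kspan {conv G a b |a b. a \<in> aug_pow G n \<and> b \<in> aug_ideal G} \<subseteq> grp_alg G"
      using aug_pow_sub[of "Suc n"] by simp
    show "u \<in> kspan {conv G a b |a b. a \<in> aug_pow G n \<and> b \<in> aug_ideal G}" using Suc.prems by simp
  next
    fix w :: "'a \<Rightarrow> 'k" assume "w \<in> {conv G a b |a b. a \<in> aug_pow G n \<and> b \<in> aug_ideal G}"
    then obtain a b where ab: "w = conv G a b" "a \<in> aug_pow G n" "b \<in> aug_ideal G" by blast
    have "a \<in> grp_alg G" "b \<in> grp_alg G" using ab aug_pow_sub aug_ideal_sub by blast+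
    then have "conv G w v = conv G a (conv G b v)" unfolding ab(1) by (rule conv_assoc)
    moreover have "conv G b v \<in> aug_ideal G" by (rule aug_ideal_right[OF ab(3) assms(2)])
    ultimately show "conv G w v \<in> aug_pow G (Suc n)" using aug_pow_gen ab(2) by simp
  qed
qed

lemma aug_pow_mult:
  fixes u v :: "'a \<Rightarrow> 'k::comm_ring_1"
  assumes "u \<in> aug_pow G m" "v \<in> aug_pow G n"
  shows "conv G u v \<in> aug_pow G (m + n)"
  using assms(2)
proof (induction n arbitrary: v)
  case 0 then show ?case using aug_pow_right[OF assms(1), of v] by simp
next
  case (Suc n)
  have u: "u \<in> grp_alg G" using assms(1) aug_pow_sub by blast
  show ?case
  proof (rule linon_kspan_into[OF linon_conv_r[OF u] _ subsp_aug_pow])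
    show "kspan {conv G a b |a b. a \<in> aug_pow G n \<and> b \<in> aug_ideal G} \<subseteq> UNIV" by simp
    show "v \<in> kspan {conv G a b |a b. a \<in> aug_pow G n \<and> b \<in> aug_ideal G}" using Suc.prems by simp
  next
    fix w :: "'a \<Rightarrow> 'k" assume "w \<in> {conv G a b |a b. a \<in> aug_pow G n \<and> b \<in> aug_ideal G}"
    then obtain a b where ab: "w = conv G a b" "a \<in> aug_pow G n" "b \<in> aug_ideal G" by blast
    have "a \<in> grp_alg G" using ab aug_pow_sub by blast
    then have "conv G u w = conv G (conv G u a) b" unfolding ab(1) by (rule conv_assoc[OF u, symmetric])
    moreover have "conv G u a \<in> aug_pow G (m + n)" by (rule Suc.IH[OF ab(2)])
    ultimately show "conv G u w \<in> aug_pow G (m + Suc n)" using aug_pow_gen ab(3) by simp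
  qed
qed

lemma aug_pow_left:
  fixes u v :: "'a \<Rightarrow> 'k::comm_ring_1"
  assumes "u \<in> grp_alg G" "v \<in> aug_pow G n"
  shows "conv G u v \<in> aug_pow G n"
  using aug_pow_mult[of u 0 v n] assms by simp

lemma aug_pow_Suc_sub: "aug_pow G (Suc n) \<subseteq> (aug_pow G n :: ('a \<Rightarrow> 'k::comm_ring_1) set)"
  unfolding aug_pow.simps
proof (rule kspan_least[OF subsp_aug_pow], rule subsetI)
  fix w :: "'a \<Rightarrow> 'k" assume "w \<in> {conv G a b |a b. a \<in> aug_pow G n \<and> b \<in> aug_ideal G}"
  then obtain a b where ab: "w = conv G a b" "a \<in> aug_pow G n" "b \<in> aug_ideal G" by blast
  then show "w \<in> aug_pow G n" using aug_pow_right aug_ideal_sub by blast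
qed

lemma aug_pow_anti: "m \<le> n \<Longrightarrow> aug_pow G n \<subseteq> (aug_pow G m :: ('a \<Rightarrow> 'k::comm_ring_1) set)"
  using lift_Suc_antimono_le[of "aug_pow G", OF aug_pow_Suc_sub] by blast

lemma aug_ideal_pow1: "aug_ideal G \<subseteq> (aug_pow G 1 :: ('a \<Rightarrow> 'k::comm_ring_1) set)"
proof
  fix b :: "'a \<Rightarrow> 'k" assume b: "b \<in> aug_ideal G"
  have "conv G (delta \<one>) b = b" using conv_one_l b aug_ideal_sub by blast
  moreover have "conv G (delta \<one>) b \<in> aug_pow G (Suc 0)"
    by (rule aug_pow_gen[OF _ b]) (simp add: delta_grp_alg)
  ultimately show "b \<in> aug_pow G 1" by simp
qed

end


context group_hom
begin

lemma alg_map_formula: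
  fixes a :: "'a \<Rightarrow> 'k::comm_ring_1"
  assumes a: "a \<in> grp_alg G" and A: "finite A" "{x. a x \<noteq> 0} \<subseteq> A" "A \<subseteq> carrier G"
  shows "alg_map G h a y = (\<Sum>x\<in>{x\<in>A. h x = y}. a x)"
  unfolding alg_map_def
proof (rule sum.mono_neutral_left)
  show "finite {x \<in> A. h x = y}" using A by simp
  show "{x \<in> carrier G. h x = y \<and> a x \<noteq> 0} \<subseteq> {x \<in> A. h x = y}" using A by blast
  show "\<forall>i\<in>{x \<in> A. h x = y} - {x \<in> carrier G. h x = y \<and> a x \<noteq> 0}. a i = 0" using A by blast
qed

lemma alg_map_lin:
  fixes u v :: "'a \<Rightarrow> 'k::comm_ring_1"
  assumes u: "u \<in> grp_alg G" and v: "v \<in> grp_alg G"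
  shows "alg_map G h (lc c u v) = lc c (alg_map G h u) (alg_map G h v)"
proof (rule ext)
  fix y
  define A where "A = {x. u x \<noteq> 0} \<union> {x. v x \<noteq> 0}"
  have fA: "finite A" using u v G.grp_alg_finite unfolding A_def by blast
  have AG: "A \<subseteq> carrier G" using u v G.grp_alg_supp unfolding A_def by blast
  have l: "lc c u v \<in> grp_alg G" by (rule subspD[OF G.subsp_grp_alg u v])
  have s: "{x. lc c u v x \<noteq> 0} \<subseteq> A" unfolding A_def by auto
  have s1: "{x. u x \<noteq> 0} \<subseteq> A" "{x. v x \<noteq> 0} \<subseteq> A" unfolding A_def by auto
  show "alg_map G h (lc c u v) y = lc c (alg_map G h u) (alg_map G h v) y"
    unfolding alg_map_formula[OF l fA s AG] alg_map_formula[OF u fA s1(1) AG] alg_map_formula[OF v fA s1(2) AG]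
    by (simp add: sum.distrib sum_distrib_left)
qed

lemma linon_alg_map: "linon (grp_alg G) (alg_map G h :: ('a \<Rightarrow> 'k::comm_ring_1) \<Rightarrow> _)"
  unfolding linon_def using alg_map_lin by blast

lemma alg_map_zero: "alg_map G h (\<lambda>_. 0 :: 'k::comm_ring_1) = (\<lambda>_. 0)"
  unfolding alg_map_def by simp

lemma alg_map_delta:
  assumes x: "x \<in> carrier G"
  shows "alg_map G h (delta x) = (delta (h x) :: 'c \<Rightarrow> 'k::comm_ring_1)"
proof (rule ext)
  fix y
  have s: "{z. (delta x z :: 'k) \<noteq> 0} \<subseteq> {x}" by (auto simp: delta_def)
  have e: "{z \<in> {x}. h z = y} = (if h x = y then {x} else {})" by auto
  have xs: "{x} \<subseteq> carrier G" using x by simp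
  show "alg_map G h (delta x) y = (delta (h x) y :: 'k)"
    unfolding alg_map_formula[OF G.delta_grp_alg[OF x] finite.insertI[OF finite.emptyI] s xs] e
    using x by (auto simp: delta_def)
qed

lemma alg_map_closed:
  fixes a :: "'a \<Rightarrow> 'k::comm_ring_1"
  assumes a: "a \<in> grp_alg G"
  shows "alg_map G h a \<in> grp_alg H"
proof (rule linon_kspan_into[OF linon_alg_map _ H.subsp_grp_alg])
  show "kspan {delta a |a. a \<in> carrier G} \<subseteq> grp_alg G" unfolding G.grp_alg_kspan by (rule order_refl)
  show "a \<in> kspan {delta a |a. a \<in> carrier G}" using a unfolding G.grp_alg_kspan .
next
  fix w :: "'a \<Rightarrow> 'k" assume "w \<in> {delta a |a. a \<in> carrier G}"
  then obtain x where x: "x \<in> carrier G" "w = delta x" by blast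
  show "alg_map G h w \<in> grp_alg H" unfolding x(2) alg_map_delta[OF x(1)]
    by (rule H.delta_grp_alg) (simp add: x(1))
qed

lemma alg_map_diff:
  fixes u v :: "'a \<Rightarrow> 'k::comm_ring_1"
  assumes u: "u \<in> grp_alg G" and v: "v \<in> grp_alg G"
  shows "alg_map G h (\<lambda>x. u x - v x) = (\<lambda>y. alg_map G h u y - alg_map G h v y)"
proof -
  have e: "(\<lambda>x. u x - v x) = lc (-1) v u" by (rule ext) simp
  show ?thesis unfolding e alg_map_lin[OF v u] by (rule ext) simp
qed

lemma alg_map_conv:
  fixes a b :: "'a \<Rightarrow> 'k::comm_ring_1"
  assumes a: "a \<in> grp_alg G" and b: "b \<in> grp_alg G"
  shows "alg_map G h (conv G a b) = conv H (alg_map G h a) (alg_map G h b)"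
proof (rule bilin_eq[of a "carrier G" b "carrier G" "\<lambda>u v. alg_map G h (conv G u v)" "\<lambda>u v. conv H (alg_map G h u) (alg_map G h v)"])
  show "a \<in> fsupp_on (carrier G)" "b \<in> fsupp_on (carrier G)" using a b unfolding grp_alg_def by auto
next
  fix v :: "'a \<Rightarrow> 'k" assume v: "v \<in> fsupp_on (carrier G)"
  then have v': "v \<in> grp_alg G" unfolding grp_alg_def .
  show "linon (fsupp_on (carrier G)) (\<lambda>u. alg_map G h (conv G u v))"
    unfolding linon_def grp_alg_def[symmetric]
  proof (intro ballI allI)
    fix u w :: "'a \<Rightarrow> 'k" and c assume uw: "u \<in> grp_alg G" "w \<in> grp_alg G"
    show "alg_map G h (conv G (lc c u w) v) = lc c (alg_map G h (conv G u v)) (alg_map G h (conv G w v))"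
      unfolding G.conv_lin_l[OF uw] by (rule alg_map_lin[OF G.conv_closed[OF uw(1) v'] G.conv_closed[OF uw(2) v']])
  qed
  show "linon (fsupp_on (carrier G)) (\<lambda>u. conv H (alg_map G h u) (alg_map G h v))"
    unfolding linon_def grp_alg_def[symmetric]
  proof (intro ballI allI)
    fix u w :: "'a \<Rightarrow> 'k" and c assume uw: "u \<in> grp_alg G" "w \<in> grp_alg G"
    show "conv H (alg_map G h (lc c u w)) (alg_map G h v) = lc c (conv H (alg_map G h u) (alg_map G h v)) (conv H (alg_map G h w) (alg_map G h v))"
      unfolding alg_map_lin[OF uw] by (rule H.conv_lin_l[OF alg_map_closed[OF uw(1)] alg_map_closed[OF uw(2)]])
  qed
next
  fix u :: "'a \<Rightarrow> 'k" assume u: "u \<in> fsupp_on (carrier G)"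
  then have u': "u \<in> grp_alg G" unfolding grp_alg_def .
  show "linon (fsupp_on (carrier G)) (\<lambda>v. alg_map G h (conv G u v))"
    unfolding linon_def grp_alg_def[symmetric]
  proof (intro ballI allI)
    fix v w :: "'a \<Rightarrow> 'k" and c assume vw: "v \<in> grp_alg G" "w \<in> grp_alg G"
    show "alg_map G h (conv G u (lc c v w)) = lc c (alg_map G h (conv G u v)) (alg_map G h (conv G u w))"
      unfolding G.conv_lin_r[OF u'] by (rule alg_map_lin[OF G.conv_closed[OF u' vw(1)] G.conv_closed[OF u' vw(2)]])
  qed
  show "linon (fsupp_on (carrier G)) (\<lambda>v. conv H (alg_map G h u) (alg_map G h v))"
    unfolding linon_def grp_alg_def[symmetric]
  proof (intro ballI allI)
    fix v w :: "'a \<Rightarrow> 'k" and c assume vw: "v \<in> grp_alg G" "w \<in> grp_alg G"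
    show "conv H (alg_map G h u) (alg_map G h (lc c v w)) = lc c (conv H (alg_map G h u) (alg_map G h v)) (conv H (alg_map G h u) (alg_map G h w))"
      unfolding alg_map_lin[OF vw] by (rule H.conv_lin_r[OF alg_map_closed[OF u']])
  qed
next
  fix x y assume xy: "x \<in> carrier G" "y \<in> carrier G"
  show "alg_map G h (conv G (delta x) (delta y)) = conv H (alg_map G h (delta x)) (alg_map G h (delta y :: 'a \<Rightarrow> 'k))"
    unfolding G.conv_delta_delta[OF xy] alg_map_delta[OF xy(1)] alg_map_delta[OF xy(2)]
      alg_map_delta[OF G.m_closed[OF xy]] H.conv_delta_delta[OF hom_closed[OF xy(1)] hom_closed[OF xy(2)]]
    using xy by simp
qed

lemma alg_map_aug:
  fixes u :: "'a \<Rightarrow> 'k::comm_ring_1"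
  assumes u: "u \<in> aug_ideal G"
  shows "alg_map G h u \<in> aug_ideal H"
proof (rule linon_kspan_into[OF linon_alg_map _ H.subsp_aug_ideal])
  show "kspan {\<lambda>x. delta g x - delta \<one> x |g. g \<in> carrier G} \<subseteq> grp_alg G"
    using G.aug_ideal_sub unfolding aug_ideal_def .
  show "u \<in> kspan {\<lambda>x. delta g x - delta \<one> x |g. g \<in> carrier G}" using u unfolding aug_ideal_def .
next
  fix w :: "'a \<Rightarrow> 'k" assume "w \<in> {\<lambda>x. delta g x - delta \<one> x |g. g \<in> carrier G}"
  then obtain g where g: "g \<in> carrier G" "w = (\<lambda>x. delta g x - delta \<one> x)" by blast
  show "alg_map G h w \<in> aug_ideal H"
    unfolding g(2) alg_map_diff[OF G.delta_grp_alg[OF g(1)] G.delta_grp_alg[OF G.one_closed]]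
      alg_map_delta[OF g(1)] alg_map_delta[OF G.one_closed] hom_one
    by (rule H.aug_gen_in) (simp add: g(1))
qed

lemma alg_map_aug_pow:
  fixes u :: "'a \<Rightarrow> 'k::comm_ring_1"
  assumes "u \<in> aug_pow G n"
  shows "alg_map G h u \<in> aug_pow H n"
  using assms
proof (induction n arbitrary: u)
  case 0 then show ?case using alg_map_closed by simp
next
  case (Suc n)
  show ?case
  proof (rule linon_kspan_into[OF linon_alg_map _ H.subsp_aug_pow])
    show "kspan {conv G a b |a b. a \<in> aug_pow G n \<and> b \<in> aug_ideal G} \<subseteq> grp_alg G"
      using G.aug_pow_sub[of "Suc n"] by simp
    show "u \<in> kspan {conv G a b |a b. a \<in> aug_pow G n \<and> b \<in> aug_ideal G}" using Suc.prems by simp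
  next
    fix w :: "'a \<Rightarrow> 'k" assume "w \<in> {conv G a b |a b. a \<in> aug_pow G n \<and> b \<in> aug_ideal G}"
    then obtain a b where ab: "w = conv G a b" "a \<in> aug_pow G n" "b \<in> aug_ideal G" by blast
    have "a \<in> grp_alg G" "b \<in> grp_alg G" using ab G.aug_pow_sub G.aug_ideal_sub by blast+
    then have "alg_map G h w = conv H (alg_map G h a) (alg_map G h b)" unfolding ab(1) by (rule alg_map_conv)
    then show "alg_map G h w \<in> aug_pow H (Suc n)"
      using H.aug_pow_gen[OF Suc.IH[OF ab(2)] alg_map_aug[OF ab(3)]] by simp
  qed
qed

end


context group
begin

lemma conv_gen_gen:
  assumes a: "a \<in> carrier G" and b: "b \<in> carrier G"
  shows "conv G (\<lambda>x. delta a x - delta \<one> x) (\<lambda>x. delta b x - delta \<one> x)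
       = (\<lambda>x. delta (a \<otimes> b) x - delta a x - delta b x + delta \<one> x :: 'k::comm_ring_1)"
  unfolding conv_diff_r[OF aug_gen_alg[OF a]] conv_gen_delta[OF a b] conv_gen_delta[OF a one_closed]
  using a by (simp add: fun_eq_iff)

lemma comm_aug2:
  assumes a: "a \<in> carrier G" and b: "b \<in> carrier G"
  shows "(\<lambda>x. delta (a \<otimes> b \<otimes> inv a \<otimes> inv b) x - delta \<one> x) \<in> (aug_pow G 2 :: ('a \<Rightarrow> 'k::comm_ring_1) set)"
proof -
  let ?ga = "\<lambda>x. delta a x - delta \<one> x :: 'k"
  let ?gb = "\<lambda>x. delta b x - delta \<one> x :: 'k"
  have p: "conv G ?ga ?gb \<in> aug_pow G (Suc 1)"
    by (rule aug_pow_gen[OF subsetD[OF aug_ideal_pow1 aug_gen_in[OF a]] aug_gen_in[OF b]])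
  have q: "conv G ?gb ?ga \<in> aug_pow G (Suc 1)"
    by (rule aug_pow_gen[OF subsetD[OF aug_ideal_pow1 aug_gen_in[OF b]] aug_gen_in[OF a]])
  have d: "(\<lambda>x. conv G ?ga ?gb x - conv G ?gb ?ga x) = (\<lambda>x. delta (a \<otimes> b) x - delta (b \<otimes> a) x)"
    unfolding conv_gen_gen[OF a b] conv_gen_gen[OF b a] by (simp add: fun_eq_iff)
  have dm: "(\<lambda>x. delta (a \<otimes> b) x - delta (b \<otimes> a) x :: 'k) \<in> aug_pow G 2"
  proof -
    have two: "aug_pow G 2 = (aug_pow G (Suc 1) :: ('a \<Rightarrow> 'k) set)" by (simp add: numeral_2_eq_2)
    show ?thesis using subsp_diff[OF subsp_aug_pow p q] unfolding d two .
  qed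
  have ba: "b \<otimes> a \<in> carrier G" "a \<otimes> b \<in> carrier G" "inv (b \<otimes> a) \<in> carrier G" using a b by auto
  have e1: "a \<otimes> b \<otimes> inv (b \<otimes> a) = a \<otimes> b \<otimes> inv a \<otimes> inv b"
    using a b by (simp add: inv_mult_group m_assoc)
  have e2: "b \<otimes> a \<otimes> inv (b \<otimes> a) = \<one>" using ba by simp
  have "conv G (\<lambda>x. delta (a \<otimes> b) x - delta (b \<otimes> a) x :: 'k) (delta (inv (b \<otimes> a)))
      = (\<lambda>x. delta (a \<otimes> b \<otimes> inv a \<otimes> inv b) x - delta \<one> x)"
    unfolding conv_diff_l[OF delta_grp_alg[OF ba(2)] delta_grp_alg[OF ba(1)]]
      conv_delta_delta[OF ba(2,3)] conv_delta_delta[OF ba(1,3)] e1 e2 by (rule refl)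
  moreover have "conv G (\<lambda>x. delta (a \<otimes> b) x - delta (b \<otimes> a) x :: 'k) (delta (inv (b \<otimes> a))) \<in> aug_pow G 2"
    by (rule aug_pow_right[OF dm delta_grp_alg[OF ba(3)]])
  ultimately show ?thesis by simp
qed

lemma derived_aug2:
  assumes "c \<in> derived G (carrier G)"
  shows "(\<lambda>x. delta c x - delta \<one> x) \<in> (aug_pow G 2 :: ('a \<Rightarrow> 'k::comm_ring_1) set)"
  using assms unfolding derived_def
proof (induction c rule: generate.induct)
  case one
  have "(\<lambda>x. delta \<one> x - delta \<one> x :: 'k) = (\<lambda>_. 0)" by simp
  then show ?case using subspD0[OF subsp_aug_pow] by simp
next
  case (incl h)
  then obtain a b where ab: "a \<in> carrier G" "b \<in> carrier G" "h = a \<otimes> b \<otimes> inv a \<otimes> inv b" by blast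
  then show ?case using comm_aug2[OF ab(1,2)] by simp
next
  case (inv h)
  then obtain a b where ab: "a \<in> carrier G" "b \<in> carrier G" "h = a \<otimes> b \<otimes> inv a \<otimes> inv b" by blast
  have "inv h = b \<otimes> a \<otimes> inv b \<otimes> inv a" using ab by (simp add: inv_mult_group m_assoc)
  then show ?case using comm_aug2[OF ab(2,1)] by simp
next
  case (eng h1 h2)
  have sub: "derived_set G (carrier G) \<subseteq> carrier G" by (rule derived_set_in_carrier) simp
  have h: "h1 \<in> carrier G" "h2 \<in> carrier G" using generate_in_carrier[OF sub] eng.hyps by auto
  have "(\<lambda>x. delta (h1 \<otimes> h2) x - delta \<one> x :: 'k)
      = (\<lambda>x. conv G (\<lambda>x. delta h1 x - delta \<one> x) (delta h2) x + (delta h2 x - delta \<one> x))"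
    unfolding conv_gen_delta[OF h] by (simp add: fun_eq_iff)
  moreover have "conv G (\<lambda>x. delta h1 x - delta \<one> x :: 'k) (delta h2) \<in> aug_pow G 2"
    by (rule aug_pow_right[OF eng.IH(1) delta_grp_alg[OF h(2)]])
  ultimately show ?case using subsp_add[OF subsp_aug_pow _ eng.IH(2)] by simp
qed

end


locale splitseq = F: group F + G: group G + H: group H
  for F :: "('f, 'x) monoid_scheme" and G :: "('g, 'y) monoid_scheme" and H :: "('h, 'z) monoid_scheme" +
  fixes \<iota> :: "'f \<Rightarrow> 'g" and \<pi> :: "'g \<Rightarrow> 'h" and \<sigma> :: "'h \<Rightarrow> 'g"
  assumes iota_hom: "\<iota> \<in> hom F G" and pi_hom: "\<pi> \<in> hom G H" and sigma_hom: "\<sigma> \<in> hom H G"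
    and iota_inj: "inj_on \<iota> (carrier F)" and exact_G: "\<iota> ` carrier F = kernel G H \<pi>"
    and split: "\<forall>h\<in>carrier H. \<pi> (\<sigma> h) = h"
begin

sublocale iG: group_hom F G \<iota> by unfold_locales (rule iota_hom)
sublocale sG: group_hom H G \<sigma> by unfold_locales (rule sigma_hom)
sublocale pH: group_hom G H \<pi> by unfold_locales (rule pi_hom)

definition dec :: "'g \<Rightarrow> 'f \<times> 'h" where
  "dec g = (the_inv_into (carrier F) \<iota> (g \<otimes>\<^bsub>G\<^esub> inv\<^bsub>G\<^esub> \<sigma> (\<pi> g)), \<pi> g)"

lemma iota_pi: "x \<in> carrier F \<Longrightarrow> \<pi> (\<iota> x) = \<one>\<^bsub>H\<^esub>"
  using exact_G unfolding kernel_def by blast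

lemma in_iota_img: "z \<in> carrier G \<Longrightarrow> \<pi> z = \<one>\<^bsub>H\<^esub> \<Longrightarrow> z \<in> \<iota> ` carrier F"
  using exact_G unfolding kernel_def by blast

lemma dec_props:
  assumes g: "g \<in> carrier G"
  shows "fst (dec g) \<in> carrier F" "snd (dec g) \<in> carrier H" "\<iota> (fst (dec g)) \<otimes>\<^bsub>G\<^esub> \<sigma> (snd (dec g)) = g"
proof -
  let ?h = "\<pi> g" and ?z = "g \<otimes>\<^bsub>G\<^esub> inv\<^bsub>G\<^esub> \<sigma> (\<pi> g)"
  have h: "?h \<in> carrier H" using g by simp
  have sh: "\<sigma> ?h \<in> carrier G" using h by simp
  have z: "?z \<in> carrier G" using g sh by simp
  have "\<pi> ?z = ?h \<otimes>\<^bsub>H\<^esub> inv\<^bsub>H\<^esub> \<pi> (\<sigma> ?h)" using g sh by simp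
  also have "\<dots> = \<one>\<^bsub>H\<^esub>" using split h by simp
  finally have "?z \<in> \<iota> ` carrier F" using in_iota_img z by blast
  then have 1: "fst (dec g) \<in> carrier F" and 2: "\<iota> (fst (dec g)) = ?z"
    unfolding dec_def using the_inv_into_into[OF iota_inj] f_the_inv_into_f[OF iota_inj] by auto
  show "fst (dec g) \<in> carrier F" by (rule 1)
  show "snd (dec g) \<in> carrier H" using h unfolding dec_def by simp
  show "\<iota> (fst (dec g)) \<otimes>\<^bsub>G\<^esub> \<sigma> (snd (dec g)) = g"
    unfolding 2 using g sh by (simp add: dec_def G.m_assoc)
qed

lemma dec_eq:
  assumes x: "x \<in> carrier F" and y: "y \<in> carrier H"
  shows "dec (\<iota> x \<otimes>\<^bsub>G\<^esub> \<sigma> y) = (x, y)"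
proof -
  have p: "\<pi> (\<iota> x \<otimes>\<^bsub>G\<^esub> \<sigma> y) = y" using x y split iota_pi by simp
  have "\<iota> x \<otimes>\<^bsub>G\<^esub> \<sigma> y \<otimes>\<^bsub>G\<^esub> inv\<^bsub>G\<^esub> \<sigma> y = \<iota> x" using x y by (simp add: G.m_assoc)
  then show ?thesis unfolding dec_def p using the_inv_into_f_f[OF iota_inj x] by simp
qed

lemma decomp_closed: "x \<in> carrier F \<Longrightarrow> y \<in> carrier H \<Longrightarrow> \<iota> x \<otimes>\<^bsub>G\<^esub> \<sigma> y \<in> carrier G"
  by simp

lemma dec_iff:
  assumes x: "x \<in> carrier F" and y: "y \<in> carrier H" and g: "g \<in> carrier G"
  shows "(\<iota> x \<otimes>\<^bsub>G\<^esub> \<sigma> y = g) \<longleftrightarrow> dec g = (x, y)"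
proof
  assume "\<iota> x \<otimes>\<^bsub>G\<^esub> \<sigma> y = g" then show "dec g = (x, y)" using dec_eq[OF x y] by simp
next
  assume "dec g = (x, y)" then show "\<iota> x \<otimes>\<^bsub>G\<^esub> \<sigma> y = g" using dec_props[OF g] by simp
qed

lemma Phi_formula:
  "Phi F H G \<iota> \<sigma> c g = (if g \<in> carrier G then c (dec g) else 0)"
proof (cases "g \<in> carrier G")
  case False
  have E: "{(x, y). x \<in> carrier F \<and> y \<in> carrier H \<and> \<iota> x \<otimes>\<^bsub>G\<^esub> \<sigma> y = g \<and> c (x, y) \<noteq> 0} = {}"
    using False decomp_closed by blast
  show ?thesis unfolding Phi_def E using False by simp
next
  case True
  have "{(x, y). x \<in> carrier F \<and> y \<in> carrier H \<and> \<iota> x \<otimes>\<^bsub>G\<^esub> \<sigma> y = g \<and> c (x, y) \<noteq> 0}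
      = (if c (dec g) \<noteq> 0 then {dec g} else {})"
  proof (rule Set.set_eqI)
    fix p :: "'f \<times> 'h"
    obtain x y where p: "p = (x, y)" by (cases p)
    show "p \<in> {(x, y). x \<in> carrier F \<and> y \<in> carrier H \<and> \<iota> x \<otimes>\<^bsub>G\<^esub> \<sigma> y = g \<and> c (x, y) \<noteq> 0}
        \<longleftrightarrow> p \<in> (if c (dec g) \<noteq> 0 then {dec g} else {})"
    proof
      assume "p \<in> {(x, y). x \<in> carrier F \<and> y \<in> carrier H \<and> \<iota> x \<otimes>\<^bsub>G\<^esub> \<sigma> y = g \<and> c (x, y) \<noteq> 0}"
      then have xy: "x \<in> carrier F" "y \<in> carrier H" "\<iota> x \<otimes>\<^bsub>G\<^esub> \<sigma> y = g" "c (x, y) \<noteq> 0" using p by auto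
      then have "dec g = (x, y)" using dec_iff[OF xy(1,2) True] by simp
      then show "p \<in> (if c (dec g) \<noteq> 0 then {dec g} else {})" using xy p by simp
    next
      assume a: "p \<in> (if c (dec g) \<noteq> 0 then {dec g} else {})"
      then have "p = dec g" "c (dec g) \<noteq> 0" by (auto split: if_splits)
      then show "p \<in> {(x, y). x \<in> carrier F \<and> y \<in> carrier H \<and> \<iota> x \<otimes>\<^bsub>G\<^esub> \<sigma> y = g \<and> c (x, y) \<noteq> 0}"
        using dec_props[OF True] p by (cases "dec g") auto
    qed
  qed
  then show ?thesis unfolding Phi_def using True by simp
qed

lemma Phi_lin: "Phi F H G \<iota> \<sigma> (lc k u v) = lc k (Phi F H G \<iota> \<sigma> u) (Phi F H G \<iota> \<sigma> v)"
  unfolding Phi_formula by (rule ext) simp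

lemma linon_Phi: "linon V (Phi F H G \<iota> \<sigma>)"
  unfolding linon_def using Phi_lin by blast

lemma Phi_add: "Phi F H G \<iota> \<sigma> (\<lambda>p. c p + d p) = (\<lambda>g. Phi F H G \<iota> \<sigma> c g + Phi F H G \<iota> \<sigma> d g)"
  unfolding Phi_formula by (rule ext) simp

lemma Phi_delta:
  assumes x: "x \<in> carrier F" and y: "y \<in> carrier H"
  shows "Phi F H G \<iota> \<sigma> (delta (x, y)) = (delta (\<iota> x \<otimes>\<^bsub>G\<^esub> \<sigma> y) :: 'g \<Rightarrow> 'k::comm_ring_1)"
proof (rule ext)
  fix g
  show "Phi F H G \<iota> \<sigma> (delta (x, y)) g = (delta (\<iota> x \<otimes>\<^bsub>G\<^esub> \<sigma> y) g :: 'k)"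
  proof (cases "g \<in> carrier G")
    case True
    then show ?thesis unfolding Phi_formula delta_def using dec_iff[OF x y True] by auto
  next
    case False
    then have "g \<noteq> \<iota> x \<otimes>\<^bsub>G\<^esub> \<sigma> y" using x y by auto
    then show ?thesis unfolding Phi_formula delta_def using False by simp
  qed
qed

lemma Phi_closed:
  fixes c :: "'f \<times> 'h \<Rightarrow> 'k::comm_ring_1"
  assumes c: "c \<in> tens_space F H"
  shows "Phi F H G \<iota> \<sigma> c \<in> grp_alg G"
proof -
  have "{g. Phi F H G \<iota> \<sigma> c g \<noteq> 0} \<subseteq> (\<lambda>(x, y). \<iota> x \<otimes>\<^bsub>G\<^esub> \<sigma> y) ` {p. c p \<noteq> 0}"
  proof
    fix g assume "g \<in> {g. Phi F H G \<iota> \<sigma> c g \<noteq> 0}"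
    then have g: "g \<in> carrier G" "c (dec g) \<noteq> 0" unfolding Phi_formula by (auto split: if_splits)
    have "g = (\<lambda>(x, y). \<iota> x \<otimes>\<^bsub>G\<^esub> \<sigma> y) (dec g)" using dec_props[OF g(1)] by (cases "dec g") auto
    then show "g \<in> (\<lambda>(x, y). \<iota> x \<otimes>\<^bsub>G\<^esub> \<sigma> y) ` {p. c p \<noteq> 0}" using g(2) by blast
  qed
  moreover have "finite {p. c p \<noteq> 0}" using c unfolding tens_space_def fsupp_on_def by blast
  ultimately have "finite {g. Phi F H G \<iota> \<sigma> c g \<noteq> 0}" using finite_subset by blast
  moreover have "{g. Phi F H G \<iota> \<sigma> c g \<noteq> 0} \<subseteq> carrier G" unfolding Phi_formula by (auto split: if_splits)
  ultimately show ?thesis unfolding grp_alg_def fsupp_on_def by blast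
qed

lemma Phi_inj: "inj_on (Phi F H G \<iota> \<sigma>) (tens_space F H :: ('f \<times> 'h \<Rightarrow> 'k::comm_ring_1) set)"
proof (rule inj_onI)
  fix c d :: "'f \<times> 'h \<Rightarrow> 'k"
  assume c: "c \<in> tens_space F H" and d: "d \<in> tens_space F H" and e: "Phi F H G \<iota> \<sigma> c = Phi F H G \<iota> \<sigma> d"
  show "c = d"
  proof (rule ext)
    fix p :: "'f \<times> 'h"
    obtain x y where p: "p = (x, y)" by (cases p)
    show "c p = d p"
    proof (cases "x \<in> carrier F \<and> y \<in> carrier H")
      case True
      have "Phi F H G \<iota> \<sigma> c (\<iota> x \<otimes>\<^bsub>G\<^esub> \<sigma> y) = Phi F H G \<iota> \<sigma> d (\<iota> x \<otimes>\<^bsub>G\<^esub> \<sigma> y)" using e by simp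
      then show ?thesis unfolding Phi_formula using True dec_eq p by simp
    next
      case False
      then have "c p = 0" "d p = 0" using c d p unfolding tens_space_def fsupp_on_def by auto
      then show ?thesis by simp
    qed
  qed
qed

lemma Phi_surj:
  fixes d :: "'g \<Rightarrow> 'k::comm_ring_1"
  assumes d: "d \<in> grp_alg G"
  shows "\<exists>c \<in> tens_space F H. Phi F H G \<iota> \<sigma> c = d"
proof -
  define c where "c = (\<lambda>(x, y). if x \<in> carrier F \<and> y \<in> carrier H then d (\<iota> x \<otimes>\<^bsub>G\<^esub> \<sigma> y) else 0)"
  have "{p. c p \<noteq> 0} \<subseteq> dec ` {g. d g \<noteq> 0}"
  proof
    fix p assume "p \<in> {p. c p \<noteq> 0}"
    then have cp: "c p \<noteq> 0" by simp
    obtain x y where p0: "p = (x, y)" by (cases p)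
    then have p: "p = (x, y)" "x \<in> carrier F" "y \<in> carrier H" "d (\<iota> x \<otimes>\<^bsub>G\<^esub> \<sigma> y) \<noteq> 0"
      using cp unfolding c_def by (auto split: if_splits)
    then show "p \<in> dec ` {g. d g \<noteq> 0}" using dec_eq[OF p(2,3)] by force
  qed
  moreover have "finite (dec ` {g. d g \<noteq> 0})" using G.grp_alg_finite[OF d] by simp
  ultimately have "finite {p. c p \<noteq> 0}" using finite_subset by blast
  moreover have "{p. c p \<noteq> 0} \<subseteq> carrier F \<times> carrier H" unfolding c_def by (auto split: if_splits)
  ultimately have cT: "c \<in> tens_space F H" unfolding tens_space_def fsupp_on_def by blast
  have "Phi F H G \<iota> \<sigma> c = d"
  proof (rule ext)
    fix g show "Phi F H G \<iota> \<sigma> c g = d g"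
    proof (cases "g \<in> carrier G")
      case True
      then show ?thesis unfolding Phi_formula c_def using dec_props[OF True] by (cases "dec g") auto
    next
      case False
      then show ?thesis unfolding Phi_formula using G.grp_alg_supp[OF d] by auto
    qed
  qed
  then show ?thesis using cT by blast
qed

lemma Phi_bij: "bij_betw (Phi F H G \<iota> \<sigma>) (tens_space F H :: ('f \<times> 'h \<Rightarrow> 'k::comm_ring_1) set) (grp_alg G)"
  unfolding bij_betw_def
proof
  show "inj_on (Phi F H G \<iota> \<sigma>) (tens_space F H :: ('f \<times> 'h \<Rightarrow> 'k) set)" by (rule Phi_inj)
  show "Phi F H G \<iota> \<sigma> ` (tens_space F H :: ('f \<times> 'h \<Rightarrow> 'k) set) = grp_alg G"
    using Phi_closed Phi_surj by blast
qed

end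


lemma tens_lin_l: "tens (lc k a a') b = lc k (tens a b) (tens a' (b :: 'h \<Rightarrow> 'k::comm_ring_1))"
  unfolding tens_def by (rule ext) (auto simp: algebra_simps)
lemma tens_lin_r: "tens a (lc k b b') = lc k (tens a b) (tens a (b' :: 'h \<Rightarrow> 'k::comm_ring_1))"
  unfolding tens_def by (rule ext) (auto simp: algebra_simps)
lemma tens_delta: "tens (delta x) (delta y) = (delta (x, y) :: _ \<Rightarrow> 'k::comm_ring_1)"
  unfolding tens_def delta_def by (rule ext) (auto split: if_splits)

context splitseq
begin

lemma tens_in:
  fixes a :: "'f \<Rightarrow> 'k::comm_ring_1" and b :: "'h \<Rightarrow> 'k"
  assumes a: "a \<in> grp_alg F" and b: "b \<in> grp_alg H"
  shows "tens a b \<in> tens_space F H"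
proof -
  have s: "{p. tens a b p \<noteq> 0} \<subseteq> {x. a x \<noteq> 0} \<times> {y. b y \<noteq> 0}" unfolding tens_def by auto
  moreover have "finite ({x. a x \<noteq> 0} \<times> {y. b y \<noteq> 0})"
    using F.grp_alg_finite[OF a] H.grp_alg_finite[OF b] by simp
  ultimately have "finite {p. tens a b p \<noteq> 0}" using finite_subset by blast
  moreover have "{x. a x \<noteq> 0} \<times> {y. b y \<noteq> 0} \<subseteq> carrier F \<times> carrier H"
    using F.grp_alg_supp[OF a] H.grp_alg_supp[OF b] by blast
  ultimately show ?thesis unfolding tens_space_def fsupp_on_def using s by blast
qed

lemma Phi_tens:
  fixes a :: "'f \<Rightarrow> 'k::comm_ring_1" and b :: "'h \<Rightarrow> 'k"
  assumes a: "a \<in> grp_alg F" and b: "b \<in> grp_alg H"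
  shows "Phi F H G \<iota> \<sigma> (tens a b) = conv G (alg_map F \<iota> a) (alg_map H \<sigma> b)"
proof (rule bilin_eq[of a "carrier F" b "carrier H" "\<lambda>u v. Phi F H G \<iota> \<sigma> (tens u v)"
      "\<lambda>u v. conv G (alg_map F \<iota> u) (alg_map H \<sigma> v)"])
  show "a \<in> fsupp_on (carrier F)" "b \<in> fsupp_on (carrier H)" using a b unfolding grp_alg_def by auto
next
  fix v :: "'h \<Rightarrow> 'k" assume v: "v \<in> fsupp_on (carrier H)"
  then have v': "v \<in> grp_alg H" unfolding grp_alg_def .
  show "linon (fsupp_on (carrier F)) (\<lambda>u. Phi F H G \<iota> \<sigma> (tens u v))"
    unfolding linon_def
  proof (intro ballI allI)
    fix u w :: "'f \<Rightarrow> 'k" and c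
    show "Phi F H G \<iota> \<sigma> (tens (lc c u w) v) = lc c (Phi F H G \<iota> \<sigma> (tens u v)) (Phi F H G \<iota> \<sigma> (tens w v))"
      unfolding tens_lin_l by (rule Phi_lin)
  qed
  show "linon (fsupp_on (carrier F)) (\<lambda>u. conv G (alg_map F \<iota> u) (alg_map H \<sigma> v))"
    unfolding linon_def grp_alg_def[symmetric]
  proof (intro ballI allI)
    fix u w :: "'f \<Rightarrow> 'k" and c assume uw: "u \<in> grp_alg F" "w \<in> grp_alg F"
    show "conv G (alg_map F \<iota> (lc c u w)) (alg_map H \<sigma> v) = lc c (conv G (alg_map F \<iota> u) (alg_map H \<sigma> v)) (conv G (alg_map F \<iota> w) (alg_map H \<sigma> v))"
      unfolding iG.alg_map_lin[OF uw] by (rule G.conv_lin_l[OF iG.alg_map_closed[OF uw(1)] iG.alg_map_closed[OF uw(2)]])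
  qed
next
  fix u :: "'f \<Rightarrow> 'k" assume u: "u \<in> fsupp_on (carrier F)"
  then have u': "u \<in> grp_alg F" unfolding grp_alg_def .
  show "linon (fsupp_on (carrier H)) (\<lambda>v. Phi F H G \<iota> \<sigma> (tens u v))"
    unfolding linon_def
  proof (intro ballI allI)
    fix v w :: "'h \<Rightarrow> 'k" and c
    show "Phi F H G \<iota> \<sigma> (tens u (lc c v w)) = lc c (Phi F H G \<iota> \<sigma> (tens u v)) (Phi F H G \<iota> \<sigma> (tens u w))"
      unfolding tens_lin_r by (rule Phi_lin)
  qed
  show "linon (fsupp_on (carrier H)) (\<lambda>v. conv G (alg_map F \<iota> u) (alg_map H \<sigma> v))"
    unfolding linon_def grp_alg_def[symmetric]
  proof (intro ballI allI)
    fix v w :: "'h \<Rightarrow> 'k" and c assume vw: "v \<in> grp_alg H" "w \<in> grp_alg H"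
    show "conv G (alg_map F \<iota> u) (alg_map H \<sigma> (lc c v w)) = lc c (conv G (alg_map F \<iota> u) (alg_map H \<sigma> v)) (conv G (alg_map F \<iota> u) (alg_map H \<sigma> w))"
      unfolding sG.alg_map_lin[OF vw] by (rule G.conv_lin_r[OF iG.alg_map_closed[OF u']])
  qed
next
  fix x y assume xy: "x \<in> carrier F" "y \<in> carrier H"
  show "Phi F H G \<iota> \<sigma> (tens (delta x) (delta y)) = conv G (alg_map F \<iota> (delta x)) (alg_map H \<sigma> (delta y :: 'h \<Rightarrow> 'k))"
    unfolding tens_delta Phi_delta[OF xy] iG.alg_map_delta[OF xy(1)] sG.alg_map_delta[OF xy(2)]
      G.conv_delta_delta[OF iG.hom_closed[OF xy(1)] sG.hom_closed[OF xy(2)]] by (rule refl)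
qed

lemma lact_delta:
  fixes c :: "'f \<times> 'h \<Rightarrow> 'k::comm_ring_1"
  assumes x: "x \<in> carrier F"
  shows "Phi F H G \<iota> \<sigma> (tens_lact F (delta x) c) = conv G (alg_map F \<iota> (delta x)) (Phi F H G \<iota> \<sigma> c)"
proof (rule ext)
  fix g
  have ix: "\<iota> x \<in> carrier G" using x by simp
  show "Phi F H G \<iota> \<sigma> (tens_lact F (delta x) c) g = conv G (alg_map F \<iota> (delta x)) (Phi F H G \<iota> \<sigma> c) g"
  proof (cases "g \<in> carrier G")
    case False
    then show ?thesis unfolding Phi_formula iG.alg_map_delta[OF x] G.conv_delta_l[OF ix] by simp
  next
    case True
    obtain z y where d: "dec g = (z, y)" by (cases "dec g")
    have zy: "z \<in> carrier F" "y \<in> carrier H" "\<iota> z \<otimes>\<^bsub>G\<^esub> \<sigma> y = g" using dec_props[OF True] d by auto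
    have eq: "inv\<^bsub>G\<^esub> \<iota> x \<otimes>\<^bsub>G\<^esub> g = \<iota> (inv\<^bsub>F\<^esub> x \<otimes>\<^bsub>F\<^esub> z) \<otimes>\<^bsub>G\<^esub> \<sigma> y"
      using zy(3)[symmetric] x zy by (simp add: G.m_assoc)
    have d2: "dec (inv\<^bsub>G\<^esub> \<iota> x \<otimes>\<^bsub>G\<^esub> g) = (inv\<^bsub>F\<^esub> x \<otimes>\<^bsub>F\<^esub> z, y)"
      unfolding eq by (rule dec_eq) (use x zy in auto)
    have ig: "inv\<^bsub>G\<^esub> \<iota> x \<otimes>\<^bsub>G\<^esub> g \<in> carrier G" using ix True by simp
    show ?thesis
      unfolding Phi_formula iG.alg_map_delta[OF x] G.conv_delta_l[OF ix] tens_lact_def F.conv_delta_l[OF x]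
      using True ig d d2 zy by simp
  qed
qed

lemma lact_eq:
  fixes c :: "'f \<times> 'h \<Rightarrow> 'k::comm_ring_1"
  assumes a: "a \<in> grp_alg F"
  shows "Phi F H G \<iota> \<sigma> (tens_lact F a c) = conv G (alg_map F \<iota> a) (Phi F H G \<iota> \<sigma> c)"
proof (rule lin_eq[of "carrier F" "\<lambda>u. Phi F H G \<iota> \<sigma> (tens_lact F u c)" "\<lambda>u. conv G (alg_map F \<iota> u) (Phi F H G \<iota> \<sigma> c)"])
  show "a \<in> fsupp_on (carrier F)" using a unfolding grp_alg_def .
  show "linon (fsupp_on (carrier F)) (\<lambda>u. Phi F H G \<iota> \<sigma> (tens_lact F u c))"
    unfolding linon_def grp_alg_def[symmetric]
  proof (intro ballI allI)
    fix u w :: "'f \<Rightarrow> 'k" and k assume uw: "u \<in> grp_alg F" "w \<in> grp_alg F"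
    have "tens_lact F (lc k u w) c = lc k (tens_lact F u c) (tens_lact F w c)"
      unfolding tens_lact_def by (rule ext) (auto simp: F.conv_lin_l[OF uw])
    then show "Phi F H G \<iota> \<sigma> (tens_lact F (lc k u w) c) = lc k (Phi F H G \<iota> \<sigma> (tens_lact F u c)) (Phi F H G \<iota> \<sigma> (tens_lact F w c))"
      using Phi_lin by simp
  qed
  show "linon (fsupp_on (carrier F)) (\<lambda>u. conv G (alg_map F \<iota> u) (Phi F H G \<iota> \<sigma> c))"
    unfolding linon_def grp_alg_def[symmetric]
  proof (intro ballI allI)
    fix u w :: "'f \<Rightarrow> 'k" and k assume uw: "u \<in> grp_alg F" "w \<in> grp_alg F"
    show "conv G (alg_map F \<iota> (lc k u w)) (Phi F H G \<iota> \<sigma> c) = lc k (conv G (alg_map F \<iota> u) (Phi F H G \<iota> \<sigma> c)) (conv G (alg_map F \<iota> w) (Phi F H G \<iota> \<sigma> c))"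
      unfolding iG.alg_map_lin[OF uw] by (rule G.conv_lin_l[OF iG.alg_map_closed[OF uw(1)] iG.alg_map_closed[OF uw(2)]])
  qed
  fix x assume "x \<in> carrier F"
  then show "Phi F H G \<iota> \<sigma> (tens_lact F (delta x) c) = conv G (alg_map F \<iota> (delta x)) (Phi F H G \<iota> \<sigma> c)"
    by (rule lact_delta)
qed

end


lemma linonI: "(\<And>u v c. u \<in> V \<Longrightarrow> v \<in> V \<Longrightarrow> f (lc c u v) = lc c (f u) (f v)) \<Longrightarrow> linon V f"
  unfolding linon_def by blast

context splitseq
begin

lemma Th_props:
  assumes h: "h \<in> carrier H" and x: "x \<in> carrier F"
  shows "Theta F G \<iota> \<sigma> h x \<in> carrier F"
    "\<iota> (Theta F G \<iota> \<sigma> h x) = \<sigma> h \<otimes>\<^bsub>G\<^esub> \<iota> x \<otimes>\<^bsub>G\<^esub> inv\<^bsub>G\<^esub> \<sigma> h"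
proof -
  let ?z = "\<sigma> h \<otimes>\<^bsub>G\<^esub> \<iota> x \<otimes>\<^bsub>G\<^esub> inv\<^bsub>G\<^esub> \<sigma> h"
  have z: "?z \<in> carrier G" using h x by simp
  have "\<pi> ?z = h \<otimes>\<^bsub>H\<^esub> \<one>\<^bsub>H\<^esub> \<otimes>\<^bsub>H\<^esub> inv\<^bsub>H\<^esub> h"
    using h x split iota_pi by simp
  also have "\<dots> = \<one>\<^bsub>H\<^esub>" using h by simp
  finally have "?z \<in> \<iota> ` carrier F" using in_iota_img z by blast
  then show "Theta F G \<iota> \<sigma> h x \<in> carrier F" "\<iota> (Theta F G \<iota> \<sigma> h x) = ?z"
    unfolding Theta_def using the_inv_into_into[OF iota_inj] f_the_inv_into_f[OF iota_inj] by auto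
qed

lemma Th_hom:
  assumes h: "h \<in> carrier H"
  shows "group_hom F F (Theta F G \<iota> \<sigma> h)"
proof -
  have hTh: "Theta F G \<iota> \<sigma> h \<in> hom F F"
  proof (rule homI)
    fix x assume "x \<in> carrier F" then show "Theta F G \<iota> \<sigma> h x \<in> carrier F" using Th_props h by blast
  next
    fix x y assume xy: "x \<in> carrier F" "y \<in> carrier F"
    have c: "Theta F G \<iota> \<sigma> h x \<in> carrier F" "Theta F G \<iota> \<sigma> h y \<in> carrier F"
      "Theta F G \<iota> \<sigma> h (x \<otimes>\<^bsub>F\<^esub> y) \<in> carrier F" using Th_props h xy by auto
    have "\<iota> (Theta F G \<iota> \<sigma> h (x \<otimes>\<^bsub>F\<^esub> y)) = \<iota> (Theta F G \<iota> \<sigma> h x \<otimes>\<^bsub>F\<^esub> Theta F G \<iota> \<sigma> h y)"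
      using Th_props[OF h] xy c h by (simp add: G.m_assoc G.inv_cancel_l1)
    then show "Theta F G \<iota> \<sigma> h (x \<otimes>\<^bsub>F\<^esub> y) = Theta F G \<iota> \<sigma> h x \<otimes>\<^bsub>F\<^esub> Theta F G \<iota> \<sigma> h y"
      using inj_onD[OF iota_inj] c by simp
  qed
  show ?thesis by (rule group_hom.intro[OF F.group_axioms F.group_axioms group_hom_axioms.intro[OF hTh]])
qed

lemma conj_rel:
  fixes z :: "'f \<Rightarrow> 'k::comm_ring_1"
  assumes h: "h \<in> carrier H" and z: "z \<in> grp_alg F"
  shows "conv G (delta (\<sigma> h)) (alg_map F \<iota> z) = conv G (alg_map F \<iota> (alg_map F (Theta F G \<iota> \<sigma> h) z)) (delta (\<sigma> h))"
proof -
  interpret T: group_hom F F "Theta F G \<iota> \<sigma> h" by (rule Th_hom[OF h])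
  have sh: "\<sigma> h \<in> carrier G" using h by simp
  show ?thesis
  proof (rule lin_eq[of "carrier F" "\<lambda>z::'f \<Rightarrow> 'k. conv G (delta (\<sigma> h)) (alg_map F \<iota> z)"
        "\<lambda>z::'f \<Rightarrow> 'k. conv G (alg_map F \<iota> (alg_map F (Theta F G \<iota> \<sigma> h) z)) (delta (\<sigma> h))"])
    show "z \<in> fsupp_on (carrier F)" using z unfolding grp_alg_def .
    show "linon (fsupp_on (carrier F)) (\<lambda>z::'f \<Rightarrow> 'k. conv G (delta (\<sigma> h)) (alg_map F \<iota> z))"
    proof (rule linonI)
      fix u w :: "'f \<Rightarrow> 'k" and k assume "u \<in> fsupp_on (carrier F)" "w \<in> fsupp_on (carrier F)"
      then have uw: "u \<in> grp_alg F" "w \<in> grp_alg F" unfolding grp_alg_def by auto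
      show "conv G (delta (\<sigma> h)) (alg_map F \<iota> (lc k u w)) = lc k (conv G (delta (\<sigma> h)) (alg_map F \<iota> u)) (conv G (delta (\<sigma> h)) (alg_map F \<iota> w))"
        unfolding iG.alg_map_lin[OF uw] by (rule G.conv_lin_r[OF G.delta_grp_alg[OF sh]])
    qed
    show "linon (fsupp_on (carrier F)) (\<lambda>z::'f \<Rightarrow> 'k. conv G (alg_map F \<iota> (alg_map F (Theta F G \<iota> \<sigma> h) z)) (delta (\<sigma> h)))"
    proof (rule linonI)
      fix u w :: "'f \<Rightarrow> 'k" and k assume "u \<in> fsupp_on (carrier F)" "w \<in> fsupp_on (carrier F)"
      then have uw: "u \<in> grp_alg F" "w \<in> grp_alg F" unfolding grp_alg_def by auto
      have c: "alg_map F (Theta F G \<iota> \<sigma> h) u \<in> grp_alg F" "alg_map F (Theta F G \<iota> \<sigma> h) w \<in> grp_alg F"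
        using T.alg_map_closed uw by auto
      show "conv G (alg_map F \<iota> (alg_map F (Theta F G \<iota> \<sigma> h) (lc k u w))) (delta (\<sigma> h)) = lc k (conv G (alg_map F \<iota> (alg_map F (Theta F G \<iota> \<sigma> h) u)) (delta (\<sigma> h))) (conv G (alg_map F \<iota> (alg_map F (Theta F G \<iota> \<sigma> h) w)) (delta (\<sigma> h)))"
        unfolding T.alg_map_lin[OF uw] iG.alg_map_lin[OF c]
        by (rule G.conv_lin_l[OF iG.alg_map_closed[OF c(1)] iG.alg_map_closed[OF c(2)]])
    qed
  next
    fix x assume x: "x \<in> carrier F"
    have t: "Theta F G \<iota> \<sigma> h x \<in> carrier F" "\<iota> (Theta F G \<iota> \<sigma> h x) = \<sigma> h \<otimes>\<^bsub>G\<^esub> \<iota> x \<otimes>\<^bsub>G\<^esub> inv\<^bsub>G\<^esub> \<sigma> h"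
      using Th_props[OF h x] by auto
    have e: "\<iota> (Theta F G \<iota> \<sigma> h x) \<otimes>\<^bsub>G\<^esub> \<sigma> h = \<sigma> h \<otimes>\<^bsub>G\<^esub> \<iota> x"
      unfolding t(2) using sh x by (simp add: G.m_assoc)
    show "conv G (delta (\<sigma> h)) (alg_map F \<iota> (delta x)) = conv G (alg_map F \<iota> (alg_map F (Theta F G \<iota> \<sigma> h) (delta x))) (delta (\<sigma> h) :: 'g \<Rightarrow> 'k)"
      unfolding T.alg_map_delta[OF x] iG.alg_map_delta[OF x] iG.alg_map_delta[OF t(1)]
        G.conv_delta_delta[OF sh iG.hom_closed[OF x]] G.conv_delta_delta[OF iG.hom_closed[OF t(1)] sh] e
      by (rule refl)
  qed
qed

end


locale splitseq_ab = splitseq F G H \<iota> \<pi> \<sigma>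
  for F :: "('f, 'x) monoid_scheme" and G :: "('g, 'y) monoid_scheme" and H :: "('h, 'z) monoid_scheme"
  and \<iota> :: "'f \<Rightarrow> 'g" and \<pi> :: "'g \<Rightarrow> 'h" and \<sigma> :: "'h \<Rightarrow> 'g" +
  assumes ab: "\<forall>h\<in>carrier H. Theta_ab_id F G \<iota> \<sigma> h"
begin

lemma Th_derived:
  assumes h: "h \<in> carrier H" and x: "x \<in> carrier F"
  shows "Theta F G \<iota> \<sigma> h x \<otimes>\<^bsub>F\<^esub> inv\<^bsub>F\<^esub> x \<in> derived F (carrier F)"
proof -
  let ?D = "derived F (carrier F)"
  let ?t = "Theta F G \<iota> \<sigma> h x"
  have sg: "subgroup ?D F" by (rule F.derived_is_subgroup) simp
  have t: "?t \<in> carrier F" using Th_props[OF h x] by simp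
  have "\<one>\<^bsub>F\<^esub> \<in> ?D" using subgroup.one_closed[OF sg] .
  moreover have "?t = \<one>\<^bsub>F\<^esub> \<otimes>\<^bsub>F\<^esub> ?t" using t by simp
  ultimately have "?t \<in> ?D #>\<^bsub>F\<^esub> ?t" unfolding r_coset_def by blast
  then have "?t \<in> ?D #>\<^bsub>F\<^esub> x" using ab h x unfolding Theta_ab_id_def by blast
  then obtain d where d: "d \<in> ?D" "?t = d \<otimes>\<^bsub>F\<^esub> x" unfolding r_coset_def by blast
  have dc: "d \<in> carrier F" using subgroup.mem_carrier[OF sg d(1)] .
  have "?t \<otimes>\<^bsub>F\<^esub> inv\<^bsub>F\<^esub> x = d" unfolding d(2) using dc x by (simp add: F.m_assoc)
  then show ?thesis using d(1) by simp
qed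

lemma Th_delta_diff:
  assumes h: "h \<in> carrier H" and x: "x \<in> carrier F"
  shows "(\<lambda>i. delta (Theta F G \<iota> \<sigma> h x) i - delta x i)
    = conv F (\<lambda>i. delta (Theta F G \<iota> \<sigma> h x \<otimes>\<^bsub>F\<^esub> inv\<^bsub>F\<^esub> x) i - delta \<one>\<^bsub>F\<^esub> i) (delta x :: 'f \<Rightarrow> 'k::comm_ring_1)"
proof -
  have t: "Theta F G \<iota> \<sigma> h x \<in> carrier F" using Th_props[OF h x] by simp
  have c: "Theta F G \<iota> \<sigma> h x \<otimes>\<^bsub>F\<^esub> inv\<^bsub>F\<^esub> x \<in> carrier F" using t x by simp
  have e: "Theta F G \<iota> \<sigma> h x \<otimes>\<^bsub>F\<^esub> inv\<^bsub>F\<^esub> x \<otimes>\<^bsub>F\<^esub> x = Theta F G \<iota> \<sigma> h x"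
    using t x by (simp add: F.m_assoc)
  show ?thesis unfolding F.conv_gen_delta[OF c x] e by (rule refl)
qed

lemma theta_gen1:
  assumes h: "h \<in> carrier H" and x: "x \<in> carrier F"
  shows "(\<lambda>i. delta (Theta F G \<iota> \<sigma> h x) i - delta x i) \<in> (aug_pow F 1 :: ('f \<Rightarrow> 'k::comm_ring_1) set)"
proof -
  have t: "Theta F G \<iota> \<sigma> h x \<in> carrier F" using Th_props[OF h x] by simp
  have c: "Theta F G \<iota> \<sigma> h x \<otimes>\<^bsub>F\<^esub> inv\<^bsub>F\<^esub> x \<in> carrier F" using t x by simp
  have "conv F (\<lambda>i. delta (Theta F G \<iota> \<sigma> h x \<otimes>\<^bsub>F\<^esub> inv\<^bsub>F\<^esub> x) i - delta \<one>\<^bsub>F\<^esub> i) (delta x :: 'f \<Rightarrow> 'k) \<in> aug_ideal F"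
    by (rule F.aug_ideal_right[OF F.aug_gen_in[OF c] F.delta_grp_alg[OF x]])
  then show ?thesis unfolding Th_delta_diff[OF h x] using F.aug_ideal_pow1 by blast
qed

lemma theta_gen2:
  assumes h: "h \<in> carrier H" and x: "x \<in> carrier F"
  shows "(\<lambda>i. delta (Theta F G \<iota> \<sigma> h x) i - delta x i) \<in> (aug_pow F 2 :: ('f \<Rightarrow> 'k::comm_ring_1) set)"
  unfolding Th_delta_diff[OF h x]
  by (rule F.aug_pow_right[OF F.derived_aug2[OF Th_derived[OF h x]] F.delta_grp_alg[OF x]])

lemma theta_linon:
  assumes h: "h \<in> carrier H"
  shows "linon (grp_alg F) (\<lambda>b::'f \<Rightarrow> 'k::comm_ring_1. \<lambda>i. alg_map F (Theta F G \<iota> \<sigma> h) b i - b i)"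
proof (rule linonI)
  interpret T: group_hom F F "Theta F G \<iota> \<sigma> h" by (rule Th_hom[OF h])
  fix u w :: "'f \<Rightarrow> 'k" and k assume uw: "u \<in> grp_alg F" "w \<in> grp_alg F"
  show "(\<lambda>i. alg_map F (Theta F G \<iota> \<sigma> h) (lc k u w) i - lc k u w i)
      = lc k (\<lambda>i. alg_map F (Theta F G \<iota> \<sigma> h) u i - u i) (\<lambda>i. alg_map F (Theta F G \<iota> \<sigma> h) w i - w i)"
    unfolding T.alg_map_lin[OF uw] by (rule ext) (simp add: algebra_simps)
qed

lemma theta_aug2:
  fixes b :: "'f \<Rightarrow> 'k::comm_ring_1"
  assumes h: "h \<in> carrier H" and b: "b \<in> aug_ideal F"
  shows "(\<lambda>i. alg_map F (Theta F G \<iota> \<sigma> h) b i - b i) \<in> aug_pow F 2"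
proof (rule linon_kspan_into[OF theta_linon[OF h] _ F.subsp_aug_pow])
  interpret T: group_hom F F "Theta F G \<iota> \<sigma> h" by (rule Th_hom[OF h])
  show "kspan {\<lambda>x. delta g x - delta \<one>\<^bsub>F\<^esub> x |g. g \<in> carrier F} \<subseteq> grp_alg F"
    using F.aug_ideal_sub unfolding aug_ideal_def .
  show "b \<in> kspan {\<lambda>x. delta g x - delta \<one>\<^bsub>F\<^esub> x |g. g \<in> carrier F}" using b unfolding aug_ideal_def .
  fix w :: "'f \<Rightarrow> 'k" assume "w \<in> {\<lambda>x. delta g x - delta \<one>\<^bsub>F\<^esub> x |g. g \<in> carrier F}"
  then obtain g where g: "g \<in> carrier F" "w = (\<lambda>x. delta g x - delta \<one>\<^bsub>F\<^esub> x)" by blast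
  have e: "(\<lambda>i. alg_map F (Theta F G \<iota> \<sigma> h) w i - w i) = (\<lambda>i. delta (Theta F G \<iota> \<sigma> h g) i - delta g i)"
    unfolding g(2) T.alg_map_diff[OF F.delta_grp_alg[OF g(1)] F.delta_grp_alg[OF F.one_closed]]
      T.alg_map_delta[OF g(1)] T.alg_map_delta[OF F.one_closed] T.hom_one by (rule ext) simp
  show "(\<lambda>i. alg_map F (Theta F G \<iota> \<sigma> h) w i - w i) \<in> aug_pow F 2"
    unfolding e by (rule theta_gen2[OF h g(1)])
qed

lemma theta_filt:
  fixes z :: "'f \<Rightarrow> 'k::comm_ring_1"
  assumes h: "h \<in> carrier H" and z: "z \<in> aug_pow F r"
  shows "(\<lambda>i. alg_map F (Theta F G \<iota> \<sigma> h) z i - z i) \<in> aug_pow F (Suc r)"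
  using z
proof (induction r arbitrary: z)
  interpret T: group_hom F F "Theta F G \<iota> \<sigma> h" by (rule Th_hom[OF h])
  case 0
  show ?case
  proof (rule linon_kspan_into[OF theta_linon[OF h] _ F.subsp_aug_pow])
    show "kspan {delta a |a. a \<in> carrier F} \<subseteq> grp_alg F" unfolding F.grp_alg_kspan by (rule order_refl)
    show "z \<in> kspan {delta a |a. a \<in> carrier F}" using 0 by (simp add: F.grp_alg_kspan)
    fix w :: "'f \<Rightarrow> 'k" assume "w \<in> {delta a |a. a \<in> carrier F}"
    then obtain x where x: "x \<in> carrier F" "w = delta x" by blast
    show "(\<lambda>i. alg_map F (Theta F G \<iota> \<sigma> h) w i - w i) \<in> aug_pow F (Suc 0)"
      unfolding x(2) T.alg_map_delta[OF x(1)] using theta_gen1[OF h x(1)] by simp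
  qed
next
  interpret T: group_hom F F "Theta F G \<iota> \<sigma> h" by (rule Th_hom[OF h])
  case (Suc r)
  show ?case
  proof (rule linon_kspan_into[OF theta_linon[OF h] _ F.subsp_aug_pow])
    show "kspan {conv F a b |a b. a \<in> aug_pow F r \<and> b \<in> aug_ideal F} \<subseteq> grp_alg F"
      using F.aug_pow_sub[of "Suc r"] by simp
    show "z \<in> kspan {conv F a b |a b. a \<in> aug_pow F r \<and> b \<in> aug_ideal F}" using Suc.prems by simp
    fix w :: "'f \<Rightarrow> 'k" assume "w \<in> {conv F a b |a b. a \<in> aug_pow F r \<and> b \<in> aug_ideal F}"
    then obtain a b where ab: "w = conv F a b" "a \<in> aug_pow F r" "b \<in> aug_ideal F" by blast
    have a: "a \<in> grp_alg F" and b: "b \<in> grp_alg F" using ab F.aug_pow_sub F.aug_ideal_sub by blast+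
    let ?T = "alg_map F (Theta F G \<iota> \<sigma> h)"
    have Ta: "?T a \<in> grp_alg F" and Tb: "?T b \<in> grp_alg F" using T.alg_map_closed a b by auto
    have e: "(\<lambda>i. ?T w i - w i) = (\<lambda>i. conv F (\<lambda>j. ?T a j - a j) (?T b) i + conv F a (\<lambda>j. ?T b j - b j) i)"
      unfolding ab(1) T.alg_map_conv[OF a b] F.conv_diff_l[OF Ta a] F.conv_diff_r[OF a]
      by (rule ext) simp
    have m1: "conv F (\<lambda>j. ?T a j - a j) (?T b) \<in> aug_pow F (Suc r + 1)"
      by (rule F.aug_pow_mult[OF Suc.IH[OF ab(2)]]) (rule subsetD[OF F.aug_ideal_pow1 T.alg_map_aug[OF ab(3)]])
    have m2: "conv F a (\<lambda>j. ?T b j - b j) \<in> aug_pow F (r + 2)"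
      by (rule F.aug_pow_mult[OF ab(2) theta_aug2[OF h ab(3)]])
    show "(\<lambda>i. ?T w i - w i) \<in> aug_pow F (Suc (Suc r))"
    proof -
      have e1: "Suc r + 1 = Suc (Suc r)" "r + 2 = Suc (Suc r)" by simp_all
      show ?thesis unfolding e using subsp_add[OF F.subsp_aug_pow m1[unfolded e1(1)] m2[unfolded e1(2)]] .
    qed
  qed
qed

end


context splitseq_ab
begin

definition Mset :: "nat \<Rightarrow> ('g \<Rightarrow> 'k::comm_ring_1) set" where
  "Mset m = kspan {conv G (alg_map F \<iota> x) (alg_map H \<sigma> y) | a x y.
      a \<le> m \<and> x \<in> aug_pow F a \<and> y \<in> aug_pow H (m - a)}"

lemma M_gen:
  fixes x :: "'f \<Rightarrow> 'k::comm_ring_1" and y :: "'h \<Rightarrow> 'k"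
  assumes x: "x \<in> aug_pow F a" and y: "y \<in> aug_pow H b" and m: "m \<le> a + b"
  shows "conv G (alg_map F \<iota> x) (alg_map H \<sigma> y) \<in> Mset m"
proof -
  let ?a = "min a m"
  have x': "x \<in> aug_pow F ?a" using F.aug_pow_anti[of ?a a] x by auto
  have "m - ?a \<le> b" using m by auto
  then have y': "y \<in> aug_pow H (m - ?a)" using H.aug_pow_anti[of "m - ?a" b] y by auto
  have "conv G (alg_map F \<iota> x) (alg_map H \<sigma> y) \<in> {conv G (alg_map F \<iota> x) (alg_map H \<sigma> y) | a x y.
      a \<le> m \<and> x \<in> aug_pow F a \<and> y \<in> aug_pow H (m - a)}"
    using x' y' by (intro CollectI exI[of _ ?a] exI[of _ x] exI[of _ y]) auto
  then show ?thesis unfolding Mset_def by (rule kspan_incl)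
qed

lemma subsp_M: "subsp (Mset m :: ('g \<Rightarrow> 'k::comm_ring_1) set)"
  unfolding Mset_def by (rule subsp_kspan)

lemma M_gens_sub:
  "{conv G (alg_map F \<iota> x) (alg_map H \<sigma> y) | a x y. a \<le> m \<and> x \<in> aug_pow F a \<and> y \<in> aug_pow H (m - a)}
    \<subseteq> (grp_alg G :: ('g \<Rightarrow> 'k::comm_ring_1) set)"
proof
  fix w :: "'g \<Rightarrow> 'k" assume "w \<in> {conv G (alg_map F \<iota> x) (alg_map H \<sigma> y) | a x y. a \<le> m \<and> x \<in> aug_pow F a \<and> y \<in> aug_pow H (m - a)}"
  then obtain a x y where w: "w = conv G (alg_map F \<iota> x) (alg_map H \<sigma> y)" "x \<in> aug_pow F a" "y \<in> aug_pow H (m - a)"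
    by blast
  have "x \<in> grp_alg F" "y \<in> grp_alg H" using w F.aug_pow_sub H.aug_pow_sub by blast+
  then show "w \<in> grp_alg G" unfolding w(1) by (intro G.conv_closed iG.alg_map_closed sG.alg_map_closed)
qed

lemma M_sub: "Mset m \<subseteq> (grp_alg G :: ('g \<Rightarrow> 'k::comm_ring_1) set)"
  unfolding Mset_def by (rule kspan_least[OF G.subsp_grp_alg M_gens_sub])

lemma sH_gen:
  assumes h: "h \<in> carrier H"
  shows "alg_map H \<sigma> (\<lambda>i. delta h i - delta \<one>\<^bsub>H\<^esub> i) = (\<lambda>i. delta (\<sigma> h) i - delta \<one>\<^bsub>G\<^esub> i :: 'k::comm_ring_1)"
  unfolding sG.alg_map_diff[OF H.delta_grp_alg[OF h] H.delta_grp_alg[OF H.one_closed]]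
    sG.alg_map_delta[OF h] sG.alg_map_delta[OF H.one_closed] sG.hom_one by (rule refl)

lemma iF_gen:
  assumes f: "f \<in> carrier F"
  shows "alg_map F \<iota> (\<lambda>i. delta f i - delta \<one>\<^bsub>F\<^esub> i) = (\<lambda>i. delta (\<iota> f) i - delta \<one>\<^bsub>G\<^esub> i :: 'k::comm_ring_1)"
  unfolding iG.alg_map_diff[OF F.delta_grp_alg[OF f] F.delta_grp_alg[OF F.one_closed]]
    iG.alg_map_delta[OF f] iG.alg_map_delta[OF F.one_closed] iG.hom_one by (rule refl)

lemma M_right_gen:
  fixes u :: "'g \<Rightarrow> 'k::comm_ring_1"
  assumes u: "u \<in> Mset m" and h: "h \<in> carrier H"
  shows "conv G u (\<lambda>i. delta (\<sigma> h) i - delta \<one>\<^bsub>G\<^esub> i) \<in> Mset (Suc m)"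
proof (rule linon_kspan_into[OF G.linon_conv_l _ subsp_M])
  show "kspan {conv G (alg_map F \<iota> x) (alg_map H \<sigma> y) | a x y. a \<le> m \<and> x \<in> aug_pow F a \<and> y \<in> aug_pow H (m - a)}
      \<subseteq> grp_alg G" using M_sub unfolding Mset_def .
  show "u \<in> kspan {conv G (alg_map F \<iota> x) (alg_map H \<sigma> y) | a x y. a \<le> m \<and> x \<in> aug_pow F a \<and> y \<in> aug_pow H (m - a)}"
    using u unfolding Mset_def .
  fix w :: "'g \<Rightarrow> 'k" assume "w \<in> {conv G (alg_map F \<iota> x) (alg_map H \<sigma> y) | a x y. a \<le> m \<and> x \<in> aug_pow F a \<and> y \<in> aug_pow H (m - a)}"
  then obtain a x y where w: "w = conv G (alg_map F \<iota> x) (alg_map H \<sigma> y)" "a \<le> m" "x \<in> aug_pow F a" "y \<in> aug_pow H (m - a)"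
    by blast
  have xa: "x \<in> grp_alg F" "y \<in> grp_alg H" using w F.aug_pow_sub H.aug_pow_sub by blast+
  have gh: "(\<lambda>i. delta h i - delta \<one>\<^bsub>H\<^esub> i :: 'k) \<in> grp_alg H" by (rule H.aug_gen_alg[OF h])
  have "conv G w (\<lambda>i. delta (\<sigma> h) i - delta \<one>\<^bsub>G\<^esub> i)
      = conv G (alg_map F \<iota> x) (conv G (alg_map H \<sigma> y) (alg_map H \<sigma> (\<lambda>i. delta h i - delta \<one>\<^bsub>H\<^esub> i)))"
    unfolding w(1) sH_gen[OF h] by (rule G.conv_assoc[OF iG.alg_map_closed[OF xa(1)] sG.alg_map_closed[OF xa(2)]])
  also have "\<dots> = conv G (alg_map F \<iota> x) (alg_map H \<sigma> (conv H y (\<lambda>i. delta h i - delta \<one>\<^bsub>H\<^esub> i)))"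
    unfolding sG.alg_map_conv[OF xa(2) gh] by (rule refl)
  finally have e: "conv G w (\<lambda>i. delta (\<sigma> h) i - delta \<one>\<^bsub>G\<^esub> i)
      = conv G (alg_map F \<iota> x) (alg_map H \<sigma> (conv H y (\<lambda>i. delta h i - delta \<one>\<^bsub>H\<^esub> i)))" .
  have "conv H y (\<lambda>i. delta h i - delta \<one>\<^bsub>H\<^esub> i) \<in> aug_pow H (Suc (m - a))"
    by (rule H.aug_pow_gen[OF w(4) H.aug_gen_in[OF h]])
  then show "conv G w (\<lambda>i. delta (\<sigma> h) i - delta \<one>\<^bsub>G\<^esub> i) \<in> Mset (Suc m)"
    unfolding e by (rule M_gen[OF w(3)]) (use w(2) in simp)
qed

lemma M_right_delta:
  fixes u :: "'g \<Rightarrow> 'k::comm_ring_1"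
  assumes u: "u \<in> Mset m" and h: "h \<in> carrier H"
  shows "conv G u (delta (\<sigma> h)) \<in> Mset m"
proof (rule linon_kspan_into[OF G.linon_conv_l _ subsp_M])
  show "kspan {conv G (alg_map F \<iota> x) (alg_map H \<sigma> y) | a x y. a \<le> m \<and> x \<in> aug_pow F a \<and> y \<in> aug_pow H (m - a)}
      \<subseteq> grp_alg G" using M_sub unfolding Mset_def .
  show "u \<in> kspan {conv G (alg_map F \<iota> x) (alg_map H \<sigma> y) | a x y. a \<le> m \<and> x \<in> aug_pow F a \<and> y \<in> aug_pow H (m - a)}"
    using u unfolding Mset_def .
  fix w :: "'g \<Rightarrow> 'k" assume "w \<in> {conv G (alg_map F \<iota> x) (alg_map H \<sigma> y) | a x y. a \<le> m \<and> x \<in> aug_pow F a \<and> y \<in> aug_pow H (m - a)}"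
  then obtain a x y where w: "w = conv G (alg_map F \<iota> x) (alg_map H \<sigma> y)" "a \<le> m" "x \<in> aug_pow F a" "y \<in> aug_pow H (m - a)"
    by blast
  have xa: "x \<in> grp_alg F" "y \<in> grp_alg H" using w F.aug_pow_sub H.aug_pow_sub by blast+
  have dh: "(delta h :: 'h \<Rightarrow> 'k) \<in> grp_alg H" by (rule H.delta_grp_alg[OF h])
  have "conv G w (delta (\<sigma> h))
      = conv G (alg_map F \<iota> x) (conv G (alg_map H \<sigma> y) (alg_map H \<sigma> (delta h)))"
    unfolding w(1) sG.alg_map_delta[OF h] by (rule G.conv_assoc[OF iG.alg_map_closed[OF xa(1)] sG.alg_map_closed[OF xa(2)]])
  also have "\<dots> = conv G (alg_map F \<iota> x) (alg_map H \<sigma> (conv H y (delta h)))"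
    unfolding sG.alg_map_conv[OF xa(2) dh] by (rule refl)
  finally have e: "conv G w (delta (\<sigma> h)) = conv G (alg_map F \<iota> x) (alg_map H \<sigma> (conv H y (delta h)))" .
  have "conv H y (delta h) \<in> aug_pow H (m - a)"
    by (rule H.aug_pow_right[OF w(4) dh])
  then show "conv G w (delta (\<sigma> h)) \<in> Mset m"
    unfolding e by (rule M_gen[OF w(3)]) (use w(2) in simp)
qed

lemma M_aug_pow: "Mset n \<subseteq> (aug_pow G n :: ('g \<Rightarrow> 'k::comm_ring_1) set)"
  unfolding Mset_def
proof (rule kspan_least[OF G.subsp_aug_pow], rule subsetI)
  fix w :: "'g \<Rightarrow> 'k" assume "w \<in> {conv G (alg_map F \<iota> x) (alg_map H \<sigma> y) | a x y. a \<le> n \<and> x \<in> aug_pow F a \<and> y \<in> aug_pow H (n - a)}"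
  then obtain a x y where w: "w = conv G (alg_map F \<iota> x) (alg_map H \<sigma> y)" "a \<le> n" "x \<in> aug_pow F a" "y \<in> aug_pow H (n - a)"
    by blast
  have "w \<in> aug_pow G (a + (n - a))"
    unfolding w(1) by (rule G.aug_pow_mult[OF iG.alg_map_aug_pow[OF w(3)] sG.alg_map_aug_pow[OF w(4)]])
  then show "w \<in> aug_pow G n" using w(2) by simp
qed

end


context splitseq_ab
begin

lemma E_lin:
  fixes x z :: "'f \<Rightarrow> 'k::comm_ring_1" and y1 y2 :: "'h \<Rightarrow> 'k"
  assumes x: "x \<in> grp_alg F" and y: "y1 \<in> grp_alg H" "y2 \<in> grp_alg H"
  shows "conv G (conv G (alg_map F \<iota> x) (alg_map H \<sigma> (lc k y1 y2))) (alg_map F \<iota> z)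
    = lc k (conv G (conv G (alg_map F \<iota> x) (alg_map H \<sigma> y1)) (alg_map F \<iota> z))
           (conv G (conv G (alg_map F \<iota> x) (alg_map H \<sigma> y2)) (alg_map F \<iota> z))"
  unfolding sG.alg_map_lin[OF y]
  by (rule G.lin_conv_conv_r[OF sG.alg_map_closed[OF y(1)] sG.alg_map_closed[OF y(2)] iG.alg_map_closed[OF x]])

lemma E_linon:
  fixes x z :: "'f \<Rightarrow> 'k::comm_ring_1"
  assumes x: "x \<in> grp_alg F"
  shows "linon (grp_alg H) (\<lambda>y::'h \<Rightarrow> 'k. conv G (conv G (alg_map F \<iota> x) (alg_map H \<sigma> y)) (alg_map F \<iota> z))"
  by (rule linonI) (rule E_lin[OF x])

lemma P_lemma:
  fixes x :: "'f \<Rightarrow> 'k::comm_ring_1"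
  assumes x: "x \<in> aug_pow F a"
  shows "y \<in> aug_pow H b \<Longrightarrow> z \<in> aug_pow F r \<Longrightarrow>
    conv G (conv G (alg_map F \<iota> x) (alg_map H \<sigma> y)) (alg_map F \<iota> z) \<in> Mset (a + b + r)"
proof (induction b arbitrary: y r z)
  have xa: "x \<in> grp_alg F" using x F.aug_pow_sub by blast
  case 0
  have za: "z \<in> grp_alg F" using 0(2) F.aug_pow_sub by blast
  show ?case
  proof (rule linon_kspan_into[OF E_linon[OF xa] _ subsp_M])
    show "kspan {delta a |a. a \<in> carrier H} \<subseteq> grp_alg H" unfolding H.grp_alg_kspan by (rule order_refl)
    show "y \<in> kspan {delta a |a. a \<in> carrier H}" using 0(1) by (simp add: H.grp_alg_kspan)
    fix w :: "'h \<Rightarrow> 'k" assume "w \<in> {delta a |a. a \<in> carrier H}"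
    then obtain h where h: "h \<in> carrier H" "w = delta h" by blast
    interpret T: group_hom F F "Theta F G \<iota> \<sigma> h" by (rule Th_hom[OF h(1)])
    have sh: "\<sigma> h \<in> carrier G" using h by simp
    have Tz: "alg_map F (Theta F G \<iota> \<sigma> h) z \<in> grp_alg F" by (rule T.alg_map_closed[OF za])
    have "conv G (conv G (alg_map F \<iota> x) (alg_map H \<sigma> w)) (alg_map F \<iota> z)
        = conv G (alg_map F \<iota> x) (conv G (delta (\<sigma> h)) (alg_map F \<iota> z))"
      unfolding h(2) sG.alg_map_delta[OF h(1)]
      by (rule G.conv_assoc[OF iG.alg_map_closed[OF xa] G.delta_grp_alg[OF sh]])
    also have "\<dots> = conv G (alg_map F \<iota> x) (conv G (alg_map F \<iota> (alg_map F (Theta F G \<iota> \<sigma> h) z)) (delta (\<sigma> h)))"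
      unfolding conj_rel[OF h(1) za] by (rule refl)
    also have "\<dots> = conv G (conv G (alg_map F \<iota> x) (alg_map F \<iota> (alg_map F (Theta F G \<iota> \<sigma> h) z))) (delta (\<sigma> h))"
      by (rule G.conv_assoc[OF iG.alg_map_closed[OF xa] iG.alg_map_closed[OF Tz], symmetric])
    also have "\<dots> = conv G (alg_map F \<iota> (conv F x (alg_map F (Theta F G \<iota> \<sigma> h) z))) (alg_map H \<sigma> (delta h))"
      unfolding iG.alg_map_conv[OF xa Tz] sG.alg_map_delta[OF h(1)] by (rule refl)
    finally have e: "conv G (conv G (alg_map F \<iota> x) (alg_map H \<sigma> w)) (alg_map F \<iota> z)
        = conv G (alg_map F \<iota> (conv F x (alg_map F (Theta F G \<iota> \<sigma> h) z))) (alg_map H \<sigma> (delta h))" .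
    have m: "conv F x (alg_map F (Theta F G \<iota> \<sigma> h) z) \<in> aug_pow F (a + r)"
      by (rule F.aug_pow_mult[OF x T.alg_map_aug_pow[OF 0(2)]])
    have d: "(delta h :: 'h \<Rightarrow> 'k) \<in> aug_pow H 0" using H.delta_grp_alg[OF h(1)] by simp
    show "conv G (conv G (alg_map F \<iota> x) (alg_map H \<sigma> w)) (alg_map F \<iota> z) \<in> Mset (a + 0 + r)"
      unfolding e by (rule M_gen[OF m d]) simp
  qed
next
  have xa: "x \<in> grp_alg F" using x F.aug_pow_sub by blast
  case (Suc b)
  have za: "z \<in> grp_alg F" using Suc(3) F.aug_pow_sub by blast
  show ?case
  proof (rule linon_kspan_into[OF E_linon[OF xa] _ subsp_M])
    show "kspan {conv H p q |p q. p \<in> aug_pow H b \<and> q \<in> aug_ideal H} \<subseteq> grp_alg H"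
      using H.aug_pow_sub[of "Suc b"] by simp
    show "y \<in> kspan {conv H p q |p q. p \<in> aug_pow H b \<and> q \<in> aug_ideal H}" using Suc(2) by simp
    fix v :: "'h \<Rightarrow> 'k" assume "v \<in> {conv H p q |p q. p \<in> aug_pow H b \<and> q \<in> aug_ideal H}"
    then obtain y' w where v: "v = conv H y' w" "y' \<in> aug_pow H b" "w \<in> aug_ideal H" by blast
    have y'a: "y' \<in> grp_alg H" using v(2) H.aug_pow_sub by blast
    have L: "linon (grp_alg H) (\<lambda>w::'h \<Rightarrow> 'k. conv G (conv G (alg_map F \<iota> x) (alg_map H \<sigma> (conv H y' w))) (alg_map F \<iota> z))"
    proof (rule linonI)
      fix w1 w2 :: "'h \<Rightarrow> 'k" and k assume w: "w1 \<in> grp_alg H" "w2 \<in> grp_alg H"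
      show "conv G (conv G (alg_map F \<iota> x) (alg_map H \<sigma> (conv H y' (lc k w1 w2)))) (alg_map F \<iota> z) =
          lc k (conv G (conv G (alg_map F \<iota> x) (alg_map H \<sigma> (conv H y' w1))) (alg_map F \<iota> z))
           (conv G (conv G (alg_map F \<iota> x) (alg_map H \<sigma> (conv H y' w2))) (alg_map F \<iota> z))"
        unfolding H.conv_lin_r[OF y'a] by (rule E_lin[OF xa H.conv_closed[OF y'a w(1)] H.conv_closed[OF y'a w(2)]])
    qed
    show "conv G (conv G (alg_map F \<iota> x) (alg_map H \<sigma> v)) (alg_map F \<iota> z) \<in> Mset (a + Suc b + r)"
      unfolding v(1)
    proof (rule linon_kspan_into[OF L _ subsp_M])
      show "kspan {\<lambda>x. delta g x - delta \<one>\<^bsub>H\<^esub> x |g. g \<in> carrier H} \<subseteq> grp_alg H"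
        using H.aug_ideal_sub unfolding aug_ideal_def .
      show "w \<in> kspan {\<lambda>x. delta g x - delta \<one>\<^bsub>H\<^esub> x |g. g \<in> carrier H}" using v(3) unfolding aug_ideal_def .
      fix gw :: "'h \<Rightarrow> 'k" assume "gw \<in> {\<lambda>x. delta g x - delta \<one>\<^bsub>H\<^esub> x |g. g \<in> carrier H}"
      then obtain h where h: "h \<in> carrier H" "gw = (\<lambda>x. delta h x - delta \<one>\<^bsub>H\<^esub> x)" by blast
      interpret T: group_hom F F "Theta F G \<iota> \<sigma> h" by (rule Th_hom[OF h(1)])
      have sh: "\<sigma> h \<in> carrier G" using h by simp
      let ?A = "conv G (alg_map F \<iota> x) (alg_map H \<sigma> y')"
      let ?Z = "alg_map F \<iota> z"
      let ?Tz = "alg_map F (Theta F G \<iota> \<sigma> h) z"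
      let ?Z' = "alg_map F \<iota> ?Tz"
      let ?D = "delta (\<sigma> h) :: 'g \<Rightarrow> 'k"
      let ?gen = "\<lambda>i. delta (\<sigma> h) i - delta \<one>\<^bsub>G\<^esub> i :: 'k"
      have Tz: "?Tz \<in> grp_alg F" by (rule T.alg_map_closed[OF za])
      have Aa: "?A \<in> grp_alg G" by (rule G.conv_closed[OF iG.alg_map_closed[OF xa] sG.alg_map_closed[OF y'a]])
      have Za: "?Z \<in> grp_alg G" by (rule iG.alg_map_closed[OF za])
      have Z'a: "?Z' \<in> grp_alg G" by (rule iG.alg_map_closed[OF Tz])
      have Da: "?D \<in> grp_alg G" by (rule G.delta_grp_alg[OF sh])
      have gena: "?gen \<in> grp_alg G" by (rule G.aug_gen_alg[OF sh])
      have ghH: "gw \<in> grp_alg H" unfolding h(2) by (rule H.aug_gen_alg[OF h(1)])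
      have AZ'a: "conv G ?A ?Z' \<in> grp_alg G" by (rule G.conv_closed[OF Aa Z'a])
      have sgw: "alg_map H \<sigma> gw = ?gen" unfolding h(2) by (rule sH_gen[OF h(1)])
      have e1a: "alg_map H \<sigma> (conv H y' gw) = conv G (alg_map H \<sigma> y') ?gen"
        unfolding sG.alg_map_conv[OF y'a ghH] sgw by (rule refl)
      have e1: "conv G (alg_map F \<iota> x) (alg_map H \<sigma> (conv H y' gw)) = conv G ?A ?gen"
        unfolding e1a
        by (rule G.conv_assoc[OF iG.alg_map_closed[OF xa] sG.alg_map_closed[OF y'a], symmetric])
      have e2: "conv G (conv G ?A ?gen) ?Z = conv G ?A (conv G ?gen ?Z)"
        by (rule G.conv_assoc[OF Aa gena])
      have e3: "conv G ?gen ?Z = (\<lambda>i. conv G ?Z' ?D i - ?Z i)"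
        unfolding G.conv_diff_l[OF Da G.delta_grp_alg[OF G.one_closed]] conj_rel[OF h(1) za] G.conv_one_l[OF Za]
        by (rule refl)
      have e4: "conv G ?A (\<lambda>i. conv G ?Z' ?D i - ?Z i) = (\<lambda>i. conv G (conv G ?A ?Z') ?D i - conv G ?A ?Z i)"
        unfolding G.conv_diff_r[OF Aa] G.conv_assoc[OF Aa Z'a] by (rule refl)
      have e5: "conv G (conv G ?A ?Z') ?gen = (\<lambda>i. conv G (conv G ?A ?Z') ?D i - conv G ?A ?Z' i)"
        unfolding G.conv_diff_r[OF AZ'a] G.conv_one_r[OF AZ'a] by (rule refl)
      have e6: "conv G ?A (alg_map F \<iota> (\<lambda>i. ?Tz i - z i)) = (\<lambda>i. conv G ?A ?Z' i - conv G ?A ?Z i)"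
        unfolding iG.alg_map_diff[OF Tz za] G.conv_diff_r[OF Aa] by (rule refl)
      have E: "conv G (conv G (alg_map F \<iota> x) (alg_map H \<sigma> (conv H y' gw))) ?Z
          = (\<lambda>i. conv G (conv G ?A ?Z') ?gen i + conv G ?A (alg_map F \<iota> (\<lambda>i. ?Tz i - z i)) i)"
        unfolding e1 e2 e3 e4 e5 e6 by (rule ext) simp
      have m1: "conv G (conv G ?A ?Z') ?gen \<in> Mset (Suc (a + b + r))"
        by (rule M_right_gen[OF Suc.IH[OF v(2) T.alg_map_aug_pow[OF Suc(3)]] h(1)])
      have m2: "conv G ?A (alg_map F \<iota> (\<lambda>i. ?Tz i - z i)) \<in> Mset (a + b + Suc r)"
        by (rule Suc.IH[OF v(2) theta_filt[OF h(1) Suc(3)]])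
      have e7: "a + b + Suc r = Suc (a + b + r)" "a + Suc b + r = Suc (a + b + r)" by simp_all
      show "conv G (conv G (alg_map F \<iota> x) (alg_map H \<sigma> (conv H y' gw))) (alg_map F \<iota> z) \<in> Mset (a + Suc b + r)"
        unfolding E e7 by (rule subsp_add[OF subsp_M m1 m2[unfolded e7(1)]])
    qed
  qed
qed

end


context splitseq_ab
begin

lemma M_step:
  fixes u :: "'g \<Rightarrow> 'k::comm_ring_1"
  assumes u: "u \<in> Mset n" and g: "g \<in> carrier G"
  shows "conv G u (\<lambda>i. delta g i - delta \<one>\<^bsub>G\<^esub> i) \<in> Mset (Suc n)"
proof (rule linon_kspan_into[OF G.linon_conv_l _ subsp_M])
  show "kspan {conv G (alg_map F \<iota> x) (alg_map H \<sigma> y) | a x y. a \<le> n \<and> x \<in> aug_pow F a \<and> y \<in> aug_pow H (n - a)}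
      \<subseteq> grp_alg G" using M_sub unfolding Mset_def .
  show "u \<in> kspan {conv G (alg_map F \<iota> x) (alg_map H \<sigma> y) | a x y. a \<le> n \<and> x \<in> aug_pow F a \<and> y \<in> aug_pow H (n - a)}"
    using u unfolding Mset_def .
  fix w :: "'g \<Rightarrow> 'k" assume wg: "w \<in> {conv G (alg_map F \<iota> x) (alg_map H \<sigma> y) | a x y. a \<le> n \<and> x \<in> aug_pow F a \<and> y \<in> aug_pow H (n - a)}"
  then obtain a x y where w: "w = conv G (alg_map F \<iota> x) (alg_map H \<sigma> y)" "a \<le> n" "x \<in> aug_pow F a" "y \<in> aug_pow H (n - a)"
    by blast
  have wM: "w \<in> Mset n" unfolding Mset_def by (rule kspan_incl[OF wg])
  have wa: "w \<in> grp_alg G" using wM M_sub by blast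
  obtain f h where d: "dec g = (f, h)" by (cases "dec g")
  have fh: "f \<in> carrier F" "h \<in> carrier H" "\<iota> f \<otimes>\<^bsub>G\<^esub> \<sigma> h = g" using dec_props[OF g] d by auto
  have if': "\<iota> f \<in> carrier G" and sh: "\<sigma> h \<in> carrier G" using fh by auto
  let ?gf = "\<lambda>i. delta (\<iota> f) i - delta \<one>\<^bsub>G\<^esub> i :: 'k"
  let ?gs = "\<lambda>i. delta (\<sigma> h) i - delta \<one>\<^bsub>G\<^esub> i :: 'k"
  have gfa: "?gf \<in> grp_alg G" by (rule G.aug_gen_alg[OF if'])
  have e0: "(\<lambda>i. delta g i - delta \<one>\<^bsub>G\<^esub> i :: 'k) = (\<lambda>i. conv G ?gf (delta (\<sigma> h)) i + ?gs i)"
    unfolding G.conv_gen_delta[OF if' sh] fh(3) by (rule ext) simp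
  have e1: "conv G w (\<lambda>i. delta g i - delta \<one>\<^bsub>G\<^esub> i) = (\<lambda>i. conv G (conv G w ?gf) (delta (\<sigma> h)) i + conv G w ?gs i)"
    unfolding e0 G.conv_add_r[OF wa] G.conv_assoc[OF wa gfa] by (rule refl)
  have z: "(\<lambda>i. delta f i - delta \<one>\<^bsub>F\<^esub> i :: 'k) \<in> aug_pow F 1"
    by (rule subsetD[OF F.aug_ideal_pow1 F.aug_gen_in[OF fh(1)]])
  have m1: "conv G w ?gf \<in> Mset (a + (n - a) + 1)"
    unfolding w(1) iF_gen[OF fh(1), symmetric] by (rule P_lemma[OF w(3) w(4) z])
  have e2: "a + (n - a) + 1 = Suc n" using w(2) by simp
  have m1': "conv G (conv G w ?gf) (delta (\<sigma> h)) \<in> Mset (Suc n)"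
    by (rule M_right_delta[OF m1[unfolded e2] fh(2)])
  have m2: "conv G w ?gs \<in> Mset (Suc n)" by (rule M_right_gen[OF wM fh(2)])
  show "conv G w (\<lambda>i. delta g i - delta \<one>\<^bsub>G\<^esub> i) \<in> Mset (Suc n)"
    unfolding e1 by (rule subsp_add[OF subsp_M m1' m2])
qed

lemma aug_pow_M: "aug_pow G n \<subseteq> (Mset n :: ('g \<Rightarrow> 'k::comm_ring_1) set)"
proof (induction n)
  case 0
  show ?case unfolding aug_pow.simps G.grp_alg_kspan
  proof (rule kspan_least[OF subsp_M], rule subsetI)
    fix w :: "'g \<Rightarrow> 'k" assume "w \<in> {delta a |a. a \<in> carrier G}"
    then obtain g where g: "g \<in> carrier G" "w = delta g" by blast
    obtain f h where d: "dec g = (f, h)" by (cases "dec g")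
    have fh: "f \<in> carrier F" "h \<in> carrier H" "\<iota> f \<otimes>\<^bsub>G\<^esub> \<sigma> h = g" using dec_props[OF g(1)] d by auto
    have e: "w = conv G (alg_map F \<iota> (delta f)) (alg_map H \<sigma> (delta h))"
      unfolding g(2) iG.alg_map_delta[OF fh(1)] sG.alg_map_delta[OF fh(2)]
        G.conv_delta_delta[OF iG.hom_closed[OF fh(1)] sG.hom_closed[OF fh(2)]] fh(3) by (rule refl)
    have df: "(delta f :: 'f \<Rightarrow> 'k) \<in> aug_pow F 0" using F.delta_grp_alg[OF fh(1)] by simp
    have dh: "(delta h :: 'h \<Rightarrow> 'k) \<in> aug_pow H 0" using H.delta_grp_alg[OF fh(2)] by simp
    show "w \<in> Mset 0" unfolding e by (rule M_gen[OF df dh]) simp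
  qed
next
  case (Suc n)
  show ?case unfolding aug_pow.simps
  proof (rule kspan_least[OF subsp_M], rule subsetI)
    fix w :: "'g \<Rightarrow> 'k" assume "w \<in> {conv G a b |a b. a \<in> aug_pow G n \<and> b \<in> aug_ideal G}"
    then obtain u v where w: "w = conv G u v" "u \<in> aug_pow G n" "v \<in> aug_ideal G" by blast
    have uM: "u \<in> Mset n" using Suc.IH w(2) by blast
    have ua: "u \<in> grp_alg G" using w(2) G.aug_pow_sub by blast
    show "w \<in> Mset (Suc n)" unfolding w(1)
    proof (rule linon_kspan_into[OF G.linon_conv_r[OF ua] _ subsp_M])
      show "kspan {\<lambda>x. delta g x - delta \<one>\<^bsub>G\<^esub> x |g. g \<in> carrier G} \<subseteq> UNIV" by simp
      show "v \<in> kspan {\<lambda>x. delta g x - delta \<one>\<^bsub>G\<^esub> x |g. g \<in> carrier G}" using w(3) unfolding aug_ideal_def .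
      fix gw :: "'g \<Rightarrow> 'k" assume "gw \<in> {\<lambda>x. delta g x - delta \<one>\<^bsub>G\<^esub> x |g. g \<in> carrier G}"
      then obtain g where g: "g \<in> carrier G" "gw = (\<lambda>x. delta g x - delta \<one>\<^bsub>G\<^esub> x)" by blast
      show "conv G u gw \<in> Mset (Suc n)" unfolding g(2) by (rule M_step[OF uM g(1)])
    qed
  qed
qed

lemma M_eq: "Mset n = (aug_pow G n :: ('g \<Rightarrow> 'k::comm_ring_1) set)"
  using M_aug_pow aug_pow_M by (rule subset_antisym)

lemma part_b:
  "bij_betw (Phi F H G \<iota> \<sigma>)
     (kspan (\<Union>a \<in> {..n}. {tens x y | x y. x \<in> (aug_pow F a :: ('f \<Rightarrow> 'k::comm_ring_1) set)
                                     \<and> y \<in> (aug_pow H (n - a) :: ('h \<Rightarrow> 'k) set)}))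
     (aug_pow G n :: ('g \<Rightarrow> 'k) set)"
proof -
  let ?S = "\<Union>a \<in> {..n}. {tens x y | x y. x \<in> (aug_pow F a :: ('f \<Rightarrow> 'k) set) \<and> y \<in> (aug_pow H (n - a) :: ('h \<Rightarrow> 'k) set)}"
  have Ssub: "?S \<subseteq> tens_space F H"
  proof
    fix t :: "'f \<times> 'h \<Rightarrow> 'k" assume "t \<in> ?S"
    then obtain a x y where t: "t = tens x y" "x \<in> aug_pow F a" "y \<in> aug_pow H (n - a)" by blast
    have "x \<in> grp_alg F" "y \<in> grp_alg H" using t F.aug_pow_sub H.aug_pow_sub by blast+
    then show "t \<in> tens_space F H" unfolding t(1) by (rule tens_in)
  qed
  have Ksub: "kspan ?S \<subseteq> tens_space F H"
    by (rule kspan_least[OF _ Ssub]) (unfold tens_space_def, rule subsp_fsupp)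
  have img: "Phi F H G \<iota> \<sigma> ` ?S = {conv G (alg_map F \<iota> x) (alg_map H \<sigma> y) | a x y.
      a \<le> n \<and> x \<in> aug_pow F a \<and> y \<in> aug_pow H (n - a)}"
  proof (rule equalityI; rule subsetI)
    fix w :: "'g \<Rightarrow> 'k" assume "w \<in> Phi F H G \<iota> \<sigma> ` ?S"
    then obtain a x y where t: "w = Phi F H G \<iota> \<sigma> (tens x y)" "a \<le> n" "x \<in> aug_pow F a" "y \<in> aug_pow H (n - a)"
      by auto
    have "x \<in> grp_alg F" "y \<in> grp_alg H" using t F.aug_pow_sub H.aug_pow_sub by blast+
    then have "w = conv G (alg_map F \<iota> x) (alg_map H \<sigma> y)" unfolding t(1) by (rule Phi_tens)
    then show "w \<in> {conv G (alg_map F \<iota> x) (alg_map H \<sigma> y) | a x y. a \<le> n \<and> x \<in> aug_pow F a \<and> y \<in> aug_pow H (n - a)}"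
      using t by blast
  next
    fix w :: "'g \<Rightarrow> 'k" assume "w \<in> {conv G (alg_map F \<iota> x) (alg_map H \<sigma> y) | a x y. a \<le> n \<and> x \<in> aug_pow F a \<and> y \<in> aug_pow H (n - a)}"
    then obtain a x y where t: "w = conv G (alg_map F \<iota> x) (alg_map H \<sigma> y)" "a \<le> n" "x \<in> aug_pow F a" "y \<in> aug_pow H (n - a)"
      by blast
    have "x \<in> grp_alg F" "y \<in> grp_alg H" using t F.aug_pow_sub H.aug_pow_sub by blast+
    then have "w = Phi F H G \<iota> \<sigma> (tens x y)" unfolding t(1) by (rule Phi_tens[symmetric])
    moreover have "tens x y \<in> ?S" using t by blast
    ultimately show "w \<in> Phi F H G \<iota> \<sigma> ` ?S" by blast
  qed
  have "Phi F H G \<iota> \<sigma> ` kspan ?S = kspan (Phi F H G \<iota> \<sigma> ` ?S)"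
    by (rule linon_kspan_image[OF linon_Phi[of UNIV]]) simp
  also have "\<dots> = Mset n" unfolding img Mset_def by (rule refl)
  also have "\<dots> = aug_pow G n" by (rule M_eq)
  finally have im: "Phi F H G \<iota> \<sigma> ` kspan ?S = aug_pow G n" .
  have inj: "inj_on (Phi F H G \<iota> \<sigma>) (kspan ?S)" by (rule inj_on_subset[OF Phi_inj Ksub])
  show ?thesis unfolding bij_betw_def using inj im by blast
qed

end


theorem propositionC1:
  fixes F :: "'f monoid" and G :: "'g monoid" and H :: "'h monoid"
    and \<iota> :: "'f \<Rightarrow> 'g" and \<pi> :: "'g \<Rightarrow> 'h" and \<sigma> :: "'h \<Rightarrow> 'g"
  assumes k: "Q_algebra TYPE('k::comm_ring_1)"
    and grpF: "group F" and grpG: "group G" and grpH: "group H"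
    and iota_hom: "\<iota> \<in> hom F G" and pi_hom: "\<pi> \<in> hom G H" and sigma_hom: "\<sigma> \<in> hom H G"
    and iota_inj: "inj_on \<iota> (carrier F)"
    and exact_G: "\<iota> ` carrier F = kernel G H \<pi>"
    and pi_surj: "\<pi> ` carrier G = carrier H"
    and split: "\<forall>h \<in> carrier H. \<pi> (\<sigma> h) = h"
  shows
    "bij_betw (Phi F H G \<iota> \<sigma>) (tens_space F H :: ('f \<times> 'h \<Rightarrow> 'k) set) (grp_alg G)
     \<and> (\<forall>c \<in> (tens_space F H :: ('f \<times> 'h \<Rightarrow> 'k) set). \<forall>d \<in> tens_space F H.
          Phi F H G \<iota> \<sigma> (\<lambda>p. c p + d p) = (\<lambda>g. Phi F H G \<iota> \<sigma> c g + Phi F H G \<iota> \<sigma> d g))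
     \<and> (\<forall>a \<in> (grp_alg F :: ('f \<Rightarrow> 'k) set). \<forall>c \<in> tens_space F H.
          Phi F H G \<iota> \<sigma> (tens_lact F a c) = conv G (alg_map F \<iota> a) (Phi F H G \<iota> \<sigma> c))
     \<and> ((\<forall>h \<in> carrier H. Theta_ab_id F G \<iota> \<sigma> h) \<longrightarrow>
          (\<forall>n::nat. bij_betw (Phi F H G \<iota> \<sigma>)
             (kspan (\<Union>a \<in> {..n}. {tens x y | x y. x \<in> (aug_pow F a :: ('f \<Rightarrow> 'k) set)
                                                 \<and> y \<in> (aug_pow H (n - a) :: ('h \<Rightarrow> 'k) set)}))
             (aug_pow G n :: ('g \<Rightarrow> 'k) set)))"
proof -
  interpret S: splitseq F G H \<iota> \<pi> \<sigma>
    by (rule splitseq.intro[OF grpF grpG grpH splitseq_axioms.intro[OF iota_hom pi_hom sigma_hom iota_inj exact_G split]])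
  show ?thesis
  proof (intro conjI)
    show "bij_betw (Phi F H G \<iota> \<sigma>) (tens_space F H :: ('f \<times> 'h \<Rightarrow> 'k) set) (grp_alg G)"
      by (rule S.Phi_bij)
    show "\<forall>c \<in> (tens_space F H :: ('f \<times> 'h \<Rightarrow> 'k) set). \<forall>d \<in> tens_space F H.
          Phi F H G \<iota> \<sigma> (\<lambda>p. c p + d p) = (\<lambda>g. Phi F H G \<iota> \<sigma> c g + Phi F H G \<iota> \<sigma> d g)"
      using S.Phi_add by blast
    show "\<forall>a \<in> (grp_alg F :: ('f \<Rightarrow> 'k) set). \<forall>c \<in> tens_space F H.
          Phi F H G \<iota> \<sigma> (tens_lact F a c) = conv G (alg_map F \<iota> a) (Phi F H G \<iota> \<sigma> c)"
      using S.lact_eq by blast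
    show "(\<forall>h \<in> carrier H. Theta_ab_id F G \<iota> \<sigma> h) \<longrightarrow>
          (\<forall>n::nat. bij_betw (Phi F H G \<iota> \<sigma>)
             (kspan (\<Union>a \<in> {..n}. {tens x y | x y. x \<in> (aug_pow F a :: ('f \<Rightarrow> 'k) set)
                                                 \<and> y \<in> (aug_pow H (n - a) :: ('h \<Rightarrow> 'k) set)}))
             (aug_pow G n :: ('g \<Rightarrow> 'k) set))"
    proof (intro impI allI)
      assume ab: "\<forall>h \<in> carrier H. Theta_ab_id F G \<iota> \<sigma> h"
      interpret SA: splitseq_ab F G H \<iota> \<pi> \<sigma>
        by (rule splitseq_ab.intro[OF S.splitseq_axioms splitseq_ab_axioms.intro[OF ab]])
      fix n :: nat
      show "bij_betw (Phi F H G \<iota> \<sigma>)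
             (kspan (\<Union>a \<in> {..n}. {tens x y | x y. x \<in> (aug_pow F a :: ('f \<Rightarrow> 'k) set)
                                                 \<and> y \<in> (aug_pow H (n - a) :: ('h \<Rightarrow> 'k) set)}))
             (aug_pow G n :: ('g \<Rightarrow> 'k) set)"
        by (rule SA.part_b)
    qed
  qed
qed

end
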